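(* Let $A$ be a noetherian ring and let $E$ be a finitely generated $A$-module. For each prime ideal $\mathfrak{p} \subset A$, let a submodule $J(\mathfrak{p}) \subset E_{\mathfrak{p}}$ be given. There exists a submodule $F\subset E$ such that $F_{\mathfrak{p}} = J(\mathfrak{p})$ for all primes $\mathfrak{p}\subset A$ if and only if both of the following conditions hold: (Consistency) For all primes $\mathfrak{p} \subset \mathfrak{q} \subset A$, we have $J(\mathfrak{p}) = J(\mathfrak{q})_{\mathfrak{p} A_{\mathfrak{q}}} = A_{\mathfrak{p}}\otimes_{A_{\mathfrak{q}}} J(\mathfrak{q})$ as submodules of $E_{\mathfrak{p}}$. (Finiteness) The set $\mathfrak{A}$ of all primes $\mathfrak{p}\subset A$ for which $\mathfrak{p} A_{\mathfrak{p}}$ is an associated prime of the $A_{\mathfrak{p}}$-module $E_{\mathfrak{p}}/J(\mathfrak{p})$ is finite. Moreover, when such $F$ exists it is unique, and $\mathrm{Ass}_A(E/F) = \mathfrak{A}$.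
   Context: For primes $\mathfrak{p}\subset\mathfrak{q}$, $E_{\mathfrak{p}}$ is identified with the localization of the $A_{\mathfrak{q}}$-module $E_{\mathfrak{q}}$ at $\mathfrak{p}A_{\mathfrak{q}}$, and $J(\mathfrak{q})_{\mathfrak{p}A_{\mathfrak{q}}}$ denotes the localization of $J(\mathfrak{q})$, viewed as a submodule of $E_{\mathfrak{p}}$. $\mathrm{Ass}_A(M)$ denotes the set of associated primes of an $A$-module $M$. *)

theory Defs
  imports "HOL-Algebra.Algebra"
begin

definition loc_cls :: "('a,'c) ring_scheme \<Rightarrow> 'a set \<Rightarrow> 'a \<Rightarrow> 'a \<Rightarrow> ('a \<times> 'a) set" where
  "loc_cls R P a s = {(b,t). b \<in> carrier R \<and> t \<in> carrier R - P \<and>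
      (\<exists>u \<in> carrier R - P. u \<otimes>\<^bsub>R\<^esub> ((t \<otimes>\<^bsub>R\<^esub> a) \<ominus>\<^bsub>R\<^esub> (s \<otimes>\<^bsub>R\<^esub> b)) = \<zero>\<^bsub>R\<^esub>)}"

definition loc_ring :: "('a,'c) ring_scheme \<Rightarrow> 'a set \<Rightarrow> ('a \<times> 'a) set ring" where
  "loc_ring R P = \<lparr>carrier = {loc_cls R P a s | a s. a \<in> carrier R \<and> s \<in> carrier R - P},
     monoid.mult = (\<lambda>U V. {z. \<exists>a s b t. (a,s) \<in> U \<and> (b,t) \<in> V \<and>
                  z \<in> loc_cls R P (a \<otimes>\<^bsub>R\<^esub> b) (s \<otimes>\<^bsub>R\<^esub> t)}),
     one = loc_cls R P \<one>\<^bsub>R\<^esub> \<one>\<^bsub>R\<^esub>,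
     ring.zero = loc_cls R P \<zero>\<^bsub>R\<^esub> \<one>\<^bsub>R\<^esub>,
     add = (\<lambda>U V. {z. \<exists>a s b t. (a,s) \<in> U \<and> (b,t) \<in> V \<and>
                  z \<in> loc_cls R P ((t \<otimes>\<^bsub>R\<^esub> a) \<oplus>\<^bsub>R\<^esub> (s \<otimes>\<^bsub>R\<^esub> b)) (s \<otimes>\<^bsub>R\<^esub> t)})\<rparr>"

definition mloc_cls :: "('a,'c) ring_scheme \<Rightarrow> ('a,'b,'d) module_scheme \<Rightarrow> 'a set \<Rightarrow> 'b \<Rightarrow> 'a \<Rightarrow> ('b \<times> 'a) set" where
  "mloc_cls R M P m s = {(n,t). n \<in> carrier M \<and> t \<in> carrier R - P \<and>
      (\<exists>u \<in> carrier R - P. u \<odot>\<^bsub>M\<^esub> ((t \<odot>\<^bsub>M\<^esub> m) \<ominus>\<^bsub>M\<^esub> (s \<odot>\<^bsub>M\<^esub> n)) = \<zero>\<^bsub>M\<^esub>)}"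

definition loc_module :: "('a,'c) ring_scheme \<Rightarrow> ('a,'b,'d) module_scheme \<Rightarrow> 'a set
    \<Rightarrow> (('a \<times> 'a) set, ('b \<times> 'a) set) module" where
  "loc_module R M P = \<lparr>carrier = {mloc_cls R M P m s | m s. m \<in> carrier M \<and> s \<in> carrier R - P},
     monoid.mult = (\<lambda>_ _. undefined),
     one = undefined,
     ring.zero = mloc_cls R M P \<zero>\<^bsub>M\<^esub> \<one>\<^bsub>R\<^esub>,
     add = (\<lambda>U V. {z. \<exists>m s n t. (m,s) \<in> U \<and> (n,t) \<in> V \<and>
                  z \<in> mloc_cls R M P ((t \<odot>\<^bsub>M\<^esub> m) \<oplus>\<^bsub>M\<^esub> (s \<odot>\<^bsub>M\<^esub> n)) (s \<otimes>\<^bsub>R\<^esub> t)}),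
     smult = (\<lambda>U V. {z. \<exists>a s m t. (a,s) \<in> U \<and> (m,t) \<in> V \<and>
                  z \<in> mloc_cls R M P (a \<odot>\<^bsub>M\<^esub> m) (s \<otimes>\<^bsub>R\<^esub> t)})\<rparr>"

definition loc_sub :: "('a,'c) ring_scheme \<Rightarrow> ('a,'b,'d) module_scheme \<Rightarrow> 'a set \<Rightarrow> 'b set
    \<Rightarrow> ('b \<times> 'a) set set" where
  "loc_sub R M P F = {mloc_cls R M P m s | m s. m \<in> F \<and> s \<in> carrier R - P}"

definition ext_ideal :: "('a,'c) ring_scheme \<Rightarrow> 'a set \<Rightarrow> 'a set \<Rightarrow> ('a \<times> 'a) set set" where
  "ext_ideal R P I = genideal (loc_ring R P) ((\<lambda>a. loc_cls R P a \<one>\<^bsub>R\<^esub>) ` I)"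

text \<open>Canonical maps A_Q \<rightarrow> A_P and E_Q \<rightarrow> E_P for P \<subseteq> Q
  (these realise the identification A_P = (A_Q)_{PA_Q}, E_P = (E_Q)_{PA_Q}).\<close>

definition ring_locmap :: "('a,'c) ring_scheme \<Rightarrow> 'a set \<Rightarrow> ('a \<times> 'a) set \<Rightarrow> ('a \<times> 'a) set" where
  "ring_locmap R P U = {z. \<exists>a s. (a,s) \<in> U \<and> z \<in> loc_cls R P a s}"

definition mod_locmap :: "('a,'c) ring_scheme \<Rightarrow> ('a,'b,'d) module_scheme \<Rightarrow> 'a set
    \<Rightarrow> ('b \<times> 'a) set \<Rightarrow> ('b \<times> 'a) set" where
  "mod_locmap R M P U = {z. \<exists>m s. (m,s) \<in> U \<and> z \<in> mloc_cls R M P m s}"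

text \<open>For P \<subseteq> Q and a submodule N of E_Q: the localisation N_{PA_Q}, viewed inside E_P,
  i.e. the elements t^{-1} x with x \<in> N and t \<in> A_Q - PA_Q.\<close>

definition loc_sub_at :: "('a,'c) ring_scheme \<Rightarrow> ('a,'b,'d) module_scheme \<Rightarrow> 'a set \<Rightarrow> 'a set
    \<Rightarrow> ('b \<times> 'a) set set \<Rightarrow> ('b \<times> 'a) set set" where
  "loc_sub_at R M P Q N =
     {(inv\<^bsub>loc_ring R P\<^esub> (ring_locmap R P t)) \<odot>\<^bsub>loc_module R M P\<^esub> (mod_locmap R M P x) | t x.
        t \<in> carrier (loc_ring R Q) - ext_ideal R Q P \<and> x \<in> N}"

text \<open>Associated primes of the quotient module M/N (over the ring R):
  primes of the form Ann(x + N) = {a. a x \<in> N}.\<close>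

definition ass_quot :: "('a,'c) ring_scheme \<Rightarrow> ('a,'b,'d) module_scheme \<Rightarrow> 'b set \<Rightarrow> 'a set set" where
  "ass_quot R M N = {P. primeideal P R \<and>
      (\<exists>x \<in> carrier M. P = {a \<in> carrier R. a \<odot>\<^bsub>M\<^esub> x \<in> N})}"

definition fin_gen_module :: "('a,'c) ring_scheme \<Rightarrow> ('a,'b,'d) module_scheme \<Rightarrow> bool" where
  "fin_gen_module R M \<longleftrightarrow> (\<exists>S. finite S \<and> S \<subseteq> carrier M \<and>
      (\<forall>H. submodule H R M \<and> S \<subseteq> H \<longrightarrow> H = carrier M))"

end

theory Submission
  imports Defs
begin


locale LG = noetherian_ring R + module R M
  for R :: "'a ring" (structure) and M :: "('a,'b) module"
begin

lemma prime_one: assumes "primeideal p R" shows "\<one> \<notin> p"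
proof
  assume "\<one> \<in> p"
  then have "p = carrier R" using ideal.one_imp_carrier[OF primeideal.axioms(1)[OF assms]] by simp
  then show False using primeideal.I_notcarr[OF assms] by simp
qed

lemma prime_sub: "primeideal p R \<Longrightarrow> p \<subseteq> carrier R"
  by (meson additive_subgroup.a_subset ideal.axioms(1) primeideal.axioms(1))

lemma prime_mult: "primeideal p R \<Longrightarrow> s \<in> carrier R - p \<Longrightarrow> t \<in> carrier R - p \<Longrightarrow> s \<otimes> t \<in> carrier R - p"
  by (meson DiffD1 DiffD2 DiffI m_closed primeideal.I_prime)

lemma prime_S1: "primeideal p R \<Longrightarrow> \<one> \<in> carrier R - p"
  using prime_one by auto

lemma cls_char:
  assumes "a \<in> carrier R" "s \<in> carrier R"
  shows "loc_cls R p a s = {(b,t). b \<in> carrier R \<and> t \<in> carrier R - p \<and>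
      (\<exists>u\<in>carrier R - p. u \<otimes> t \<otimes> a = u \<otimes> s \<otimes> b)}"
proof -
  have "\<And>u b t. u \<in> carrier R \<Longrightarrow> b \<in> carrier R \<Longrightarrow> t \<in> carrier R \<Longrightarrow>
     (u \<otimes> (t \<otimes> a \<ominus> s \<otimes> b) = \<zero>) = (u \<otimes> t \<otimes> a = u \<otimes> s \<otimes> b)"
  proof -
    fix u b t assume "u \<in> carrier R" "b \<in> carrier R" "t \<in> carrier R"
    then have "u \<otimes> (t \<otimes> a \<ominus> s \<otimes> b) = u \<otimes> t \<otimes> a \<ominus> u \<otimes> s \<otimes> b"
      using assms by algebra
    then show "(u \<otimes> (t \<otimes> a \<ominus> s \<otimes> b) = \<zero>) = (u \<otimes> t \<otimes> a = u \<otimes> s \<otimes> b)"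
      using assms \<open>u \<in> carrier R\<close> \<open>b \<in> carrier R\<close> \<open>t \<in> carrier R\<close> by simp
  qed
  then show ?thesis unfolding loc_cls_def by auto
qed

lemma cls_refl: "a \<in> carrier R \<Longrightarrow> s \<in> carrier R - p \<Longrightarrow> primeideal p R \<Longrightarrow> (a,s) \<in> loc_cls R p a s"
  using cls_char[of a s p] prime_S1[of p] by (auto intro!: bexI[of _ \<one>])

lemma cls_eq:
  assumes P: "primeideal p R" and ab: "a \<in> carrier R" "b \<in> carrier R" and st: "s \<in> carrier R - p" "t \<in> carrier R - p"
  shows "loc_cls R p a s = loc_cls R p b t \<longleftrightarrow> (\<exists>u\<in>carrier R - p. u \<otimes> t \<otimes> a = u \<otimes> s \<otimes> b)"
proof
  assume "loc_cls R p a s = loc_cls R p b t"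
  then have "(b,t) \<in> loc_cls R p a s" using cls_refl[OF ab(2) st(2) P] by simp
  then show "\<exists>u\<in>carrier R - p. u \<otimes> t \<otimes> a = u \<otimes> s \<otimes> b" using cls_char[of a s p] ab st by auto
next
  assume "\<exists>u\<in>carrier R - p. u \<otimes> t \<otimes> a = u \<otimes> s \<otimes> b"
  then obtain u where u: "u \<in> carrier R - p" and e1: "u \<otimes> t \<otimes> a = u \<otimes> s \<otimes> b" by blast
  have cu: "u \<in> carrier R" "s \<in> carrier R" "t \<in> carrier R" using u st by auto
  show "loc_cls R p a s = loc_cls R p b t"
  proof (unfold cls_char[OF ab(1) cu(2)] cls_char[OF ab(2) cu(3)], safe)
    fix c r v assume c: "c \<in> carrier R" "r \<in> carrier R" "r \<notin> p" "v \<in> carrier R" "v \<notin> p"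
      and e2: "v \<otimes> r \<otimes> a = v \<otimes> s \<otimes> c"
    have "(u \<otimes> v \<otimes> s) \<otimes> r \<otimes> b = (v \<otimes> r) \<otimes> (u \<otimes> s \<otimes> b)" using c cu ab by algebra
    also have "\<dots> = (v \<otimes> r) \<otimes> (u \<otimes> t \<otimes> a)" using e1 by simp
    also have "\<dots> = (u \<otimes> t) \<otimes> (v \<otimes> r \<otimes> a)" using c cu ab by algebra
    also have "\<dots> = (u \<otimes> t) \<otimes> (v \<otimes> s \<otimes> c)" using e2 by simp
    also have "\<dots> = (u \<otimes> v \<otimes> s) \<otimes> t \<otimes> c" using c cu ab by algebra
    finally show "\<exists>w\<in>carrier R - p. w \<otimes> r \<otimes> b = w \<otimes> t \<otimes> c"
      using prime_mult[OF P prime_mult[OF P u, of v] st(1)] c by (intro bexI[of _ "u \<otimes> v \<otimes> s"]) auto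
  next
    fix c r v assume c: "c \<in> carrier R" "r \<in> carrier R" "r \<notin> p" "v \<in> carrier R" "v \<notin> p"
      and e2: "v \<otimes> r \<otimes> b = v \<otimes> t \<otimes> c"
    have "(u \<otimes> v \<otimes> t) \<otimes> r \<otimes> a = (v \<otimes> r) \<otimes> (u \<otimes> t \<otimes> a)" using c cu ab by algebra
    also have "\<dots> = (v \<otimes> r) \<otimes> (u \<otimes> s \<otimes> b)" using e1 by simp
    also have "\<dots> = (u \<otimes> s) \<otimes> (v \<otimes> r \<otimes> b)" using c cu ab by algebra
    also have "\<dots> = (u \<otimes> s) \<otimes> (v \<otimes> t \<otimes> c)" using e2 by simp
    also have "\<dots> = (u \<otimes> v \<otimes> t) \<otimes> s \<otimes> c" using c cu ab by algebra
    finally show "\<exists>w\<in>carrier R - p. w \<otimes> r \<otimes> a = w \<otimes> s \<otimes> c"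
      using prime_mult[OF P prime_mult[OF P u, of v] st(2)] c by (intro bexI[of _ "u \<otimes> v \<otimes> t"]) auto
  qed
qed

lemma cls_mem_eq:
  assumes P: "primeideal p R" and "a \<in> carrier R" "s \<in> carrier R - p" "(b,t) \<in> loc_cls R p a s"
  shows "loc_cls R p b t = loc_cls R p a s"
proof -
  from assms(4) have bt: "b \<in> carrier R" "t \<in> carrier R - p" and "\<exists>u\<in>carrier R - p. u \<otimes> t \<otimes> a = u \<otimes> s \<otimes> b"
    using cls_char[of a s p] assms(2,3) by auto
  then show ?thesis using cls_eq[OF P assms(2) bt(1) assms(3) bt(2)] by simp
qed

end


context LG begin

lemma M_minus_eq: "x \<in> carrier M \<Longrightarrow> y \<in> carrier M \<Longrightarrow> (x \<ominus>\<^bsub>M\<^esub> y = \<zero>\<^bsub>M\<^esub>) = (x = y)"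
  by (metis a_minus_def M.add.inv_closed M.minus_equality M.r_neg M.minus_minus)

lemma smult_minus: "u \<in> carrier R \<Longrightarrow> x \<in> carrier M \<Longrightarrow> y \<in> carrier M \<Longrightarrow>
   u \<odot>\<^bsub>M\<^esub> (x \<ominus>\<^bsub>M\<^esub> y) = u \<odot>\<^bsub>M\<^esub> x \<ominus>\<^bsub>M\<^esub> u \<odot>\<^bsub>M\<^esub> y"
  by (simp add: a_minus_def smult_r_distr smult_r_minus)

lemma sm_re: "a \<in> carrier R \<Longrightarrow> b \<in> carrier R \<Longrightarrow> c \<in> carrier R \<Longrightarrow> a = b \<otimes> c \<Longrightarrow> x \<in> carrier M \<Longrightarrow>
   a \<odot>\<^bsub>M\<^esub> x = b \<odot>\<^bsub>M\<^esub> (c \<odot>\<^bsub>M\<^esub> x)"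
  by (simp add: smult_assoc1)

lemma mcls_char:
  assumes "m \<in> carrier M" "s \<in> carrier R"
  shows "mloc_cls R M p m s = {(n,t). n \<in> carrier M \<and> t \<in> carrier R - p \<and>
      (\<exists>u\<in>carrier R - p. (u \<otimes> t) \<odot>\<^bsub>M\<^esub> m = (u \<otimes> s) \<odot>\<^bsub>M\<^esub> n)}"
proof -
  have "\<And>u n t. u \<in> carrier R \<Longrightarrow> n \<in> carrier M \<Longrightarrow> t \<in> carrier R \<Longrightarrow>
     (u \<odot>\<^bsub>M\<^esub> (t \<odot>\<^bsub>M\<^esub> m \<ominus>\<^bsub>M\<^esub> s \<odot>\<^bsub>M\<^esub> n) = \<zero>\<^bsub>M\<^esub>) = ((u \<otimes> t) \<odot>\<^bsub>M\<^esub> m = (u \<otimes> s) \<odot>\<^bsub>M\<^esub> n)"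
    using assms by (simp add: smult_minus M_minus_eq smult_assoc1)
  then show ?thesis unfolding mloc_cls_def by auto
qed

lemma mcls_refl: "m \<in> carrier M \<Longrightarrow> s \<in> carrier R - p \<Longrightarrow> primeideal p R \<Longrightarrow> (m,s) \<in> mloc_cls R M p m s"
  using mcls_char[of m s p] prime_S1[of p] by (auto intro!: bexI[of _ \<one>])

lemma mcls_eq:
  assumes P: "primeideal p R" and ab: "m \<in> carrier M" "n \<in> carrier M" and st: "s \<in> carrier R - p" "t \<in> carrier R - p"
  shows "mloc_cls R M p m s = mloc_cls R M p n t \<longleftrightarrow> (\<exists>u\<in>carrier R - p. (u \<otimes> t) \<odot>\<^bsub>M\<^esub> m = (u \<otimes> s) \<odot>\<^bsub>M\<^esub> n)"
proof
  assume "mloc_cls R M p m s = mloc_cls R M p n t"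
  then have "(n,t) \<in> mloc_cls R M p m s" using mcls_refl[OF ab(2) st(2) P] by simp
  then show "\<exists>u\<in>carrier R - p. (u \<otimes> t) \<odot>\<^bsub>M\<^esub> m = (u \<otimes> s) \<odot>\<^bsub>M\<^esub> n" using mcls_char[of m s p] ab st by auto
next
  assume "\<exists>u\<in>carrier R - p. (u \<otimes> t) \<odot>\<^bsub>M\<^esub> m = (u \<otimes> s) \<odot>\<^bsub>M\<^esub> n"
  then obtain u where u: "u \<in> carrier R - p" and e1: "(u \<otimes> t) \<odot>\<^bsub>M\<^esub> m = (u \<otimes> s) \<odot>\<^bsub>M\<^esub> n" by blast
  have cu: "u \<in> carrier R" "s \<in> carrier R" "t \<in> carrier R" using u st by auto
  show "mloc_cls R M p m s = mloc_cls R M p n t"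
  proof (unfold mcls_char[OF ab(1) cu(2)] mcls_char[OF ab(2) cu(3)], safe)
    fix c r v assume c: "c \<in> carrier M" "r \<in> carrier R" "r \<notin> p" "v \<in> carrier R" "v \<notin> p"
      and e2: "(v \<otimes> r) \<odot>\<^bsub>M\<^esub> m = (v \<otimes> s) \<odot>\<^bsub>M\<^esub> c"
    have "((u \<otimes> v \<otimes> s) \<otimes> r) \<odot>\<^bsub>M\<^esub> n = (v \<otimes> r) \<odot>\<^bsub>M\<^esub> ((u \<otimes> s) \<odot>\<^bsub>M\<^esub> n)"
      using c cu ab by (intro sm_re) (auto, algebra)
    also have "\<dots> = (v \<otimes> r) \<odot>\<^bsub>M\<^esub> ((u \<otimes> t) \<odot>\<^bsub>M\<^esub> m)" using e1 by simp
    also have "\<dots> = ((u \<otimes> t) \<otimes> (v \<otimes> r)) \<odot>\<^bsub>M\<^esub> m" using c cu ab by (simp add: smult_assoc1 m_comm)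
    also have "\<dots> = (u \<otimes> t) \<odot>\<^bsub>M\<^esub> ((v \<otimes> r) \<odot>\<^bsub>M\<^esub> m)" using c cu ab by (simp add: smult_assoc1)
    also have "\<dots> = (u \<otimes> t) \<odot>\<^bsub>M\<^esub> ((v \<otimes> s) \<odot>\<^bsub>M\<^esub> c)" using e2 by simp
    also have "\<dots> = ((u \<otimes> v \<otimes> s) \<otimes> t) \<odot>\<^bsub>M\<^esub> c"
      using c cu ab by (intro sm_re[symmetric]) (auto, algebra)
    finally show "\<exists>w\<in>carrier R - p. (w \<otimes> r) \<odot>\<^bsub>M\<^esub> n = (w \<otimes> t) \<odot>\<^bsub>M\<^esub> c"
      using prime_mult[OF P prime_mult[OF P u, of v] st(1)] c by (intro bexI[of _ "u \<otimes> v \<otimes> s"]) auto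
  next
    fix c r v assume c: "c \<in> carrier M" "r \<in> carrier R" "r \<notin> p" "v \<in> carrier R" "v \<notin> p"
      and e2: "(v \<otimes> r) \<odot>\<^bsub>M\<^esub> n = (v \<otimes> t) \<odot>\<^bsub>M\<^esub> c"
    have "((u \<otimes> v \<otimes> t) \<otimes> r) \<odot>\<^bsub>M\<^esub> m = (v \<otimes> r) \<odot>\<^bsub>M\<^esub> ((u \<otimes> t) \<odot>\<^bsub>M\<^esub> m)"
      using c cu ab by (intro sm_re) (auto, algebra)
    also have "\<dots> = (v \<otimes> r) \<odot>\<^bsub>M\<^esub> ((u \<otimes> s) \<odot>\<^bsub>M\<^esub> n)" using e1 by simp
    also have "\<dots> = ((u \<otimes> s) \<otimes> (v \<otimes> r)) \<odot>\<^bsub>M\<^esub> n" using c cu ab by (simp add: smult_assoc1 m_comm)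
    also have "\<dots> = (u \<otimes> s) \<odot>\<^bsub>M\<^esub> ((v \<otimes> r) \<odot>\<^bsub>M\<^esub> n)" using c cu ab by (simp add: smult_assoc1)
    also have "\<dots> = (u \<otimes> s) \<odot>\<^bsub>M\<^esub> ((v \<otimes> t) \<odot>\<^bsub>M\<^esub> c)" using e2 by simp
    also have "\<dots> = ((u \<otimes> v \<otimes> t) \<otimes> s) \<odot>\<^bsub>M\<^esub> c"
      using c cu ab by (intro sm_re[symmetric]) (auto, algebra)
    finally show "\<exists>w\<in>carrier R - p. (w \<otimes> r) \<odot>\<^bsub>M\<^esub> m = (w \<otimes> s) \<odot>\<^bsub>M\<^esub> c"
      using prime_mult[OF P prime_mult[OF P u, of v] st(2)] c by (intro bexI[of _ "u \<otimes> v \<otimes> t"]) auto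
  qed
qed

lemma mcls_mem_eq:
  assumes P: "primeideal p R" and "m \<in> carrier M" "s \<in> carrier R - p" "(n,t) \<in> mloc_cls R M p m s"
  shows "mloc_cls R M p n t = mloc_cls R M p m s"
proof -
  from assms(4) have bt: "n \<in> carrier M" "t \<in> carrier R - p" and "\<exists>u\<in>carrier R - p. (u \<otimes> t) \<odot>\<^bsub>M\<^esub> m = (u \<otimes> s) \<odot>\<^bsub>M\<^esub> n"
    using mcls_char[of m s p] assms(2,3) by auto
  then show ?thesis using mcls_eq[OF P assms(2) bt(1) assms(3) bt(2)] by simp
qed

end


context LG begin

lemma cls_memD:
  assumes "(a',s') \<in> loc_cls R p a s" "a \<in> carrier R" "s \<in> carrier R"
  shows "a' \<in> carrier R" "s' \<in> carrier R - p" "\<exists>u\<in>carrier R - p. u \<otimes> s' \<otimes> a = u \<otimes> s \<otimes> a'"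
  using assms cls_char[of a s p] by auto

lemma mcls_memD:
  assumes "(m',s') \<in> mloc_cls R M p m s" "m \<in> carrier M" "s \<in> carrier R"
  shows "m' \<in> carrier M" "s' \<in> carrier R - p" "\<exists>u\<in>carrier R - p. (u \<otimes> s') \<odot>\<^bsub>M\<^esub> m = (u \<otimes> s) \<odot>\<^bsub>M\<^esub> m'"
  using assms mcls_char[of m s p] by auto

lemma mult_cls:
  assumes P: "primeideal p R" and c: "a \<in> carrier R" "b \<in> carrier R" "s \<in> carrier R - p" "t \<in> carrier R - p"
  shows "loc_cls R p a s \<otimes>\<^bsub>loc_ring R p\<^esub> loc_cls R p b t = loc_cls R p (a \<otimes> b) (s \<otimes> t)"
proof -
  have wd: "loc_cls R p (a' \<otimes> b') (s' \<otimes> t') = loc_cls R p (a \<otimes> b) (s \<otimes> t)"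
    if h: "(a',s') \<in> loc_cls R p a s" "(b',t') \<in> loc_cls R p b t" for a' s' b' t'
  proof -
    obtain u where u: "u \<in> carrier R - p" "u \<otimes> s' \<otimes> a = u \<otimes> s \<otimes> a'" using cls_memD(3)[OF h(1)] c by auto
    obtain v where v: "v \<in> carrier R - p" "v \<otimes> t' \<otimes> b = v \<otimes> t \<otimes> b'" using cls_memD(3)[OF h(2)] c by auto
    have cc: "a' \<in> carrier R" "s' \<in> carrier R - p" "b' \<in> carrier R" "t' \<in> carrier R - p"
      using cls_memD[OF h(1)] cls_memD[OF h(2)] c by auto
    have cr: "u \<in> carrier R" "v \<in> carrier R" "s \<in> carrier R" "t \<in> carrier R" "a' \<in> carrier R"
      "s' \<in> carrier R" "b' \<in> carrier R" "t' \<in> carrier R" using u v c cc by auto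
    have "(u \<otimes> v) \<otimes> (s \<otimes> t) \<otimes> (a' \<otimes> b') = (u \<otimes> s \<otimes> a') \<otimes> (v \<otimes> t \<otimes> b')"
      using cr c(1,2) by algebra
    also have "\<dots> = (u \<otimes> s' \<otimes> a) \<otimes> (v \<otimes> t' \<otimes> b)" using u v by simp
    also have "\<dots> = (u \<otimes> v) \<otimes> (s' \<otimes> t') \<otimes> (a \<otimes> b)" using cr c(1,2) by algebra
    finally show ?thesis using cls_eq[OF P, of "a' \<otimes> b'" "a \<otimes> b" "s' \<otimes> t'" "s \<otimes> t"] prime_mult[OF P] u v c cc
      by (meson m_closed)
  qed
  show ?thesis
    unfolding loc_ring_def apply simp
    using wd cls_refl[OF c(1) c(3) P] cls_refl[OF c(2) c(4) P] by blast
qed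

lemma add_cls:
  assumes P: "primeideal p R" and c: "a \<in> carrier R" "b \<in> carrier R" "s \<in> carrier R - p" "t \<in> carrier R - p"
  shows "loc_cls R p a s \<oplus>\<^bsub>loc_ring R p\<^esub> loc_cls R p b t = loc_cls R p (t \<otimes> a \<oplus> s \<otimes> b) (s \<otimes> t)"
proof -
  have wd: "loc_cls R p (t' \<otimes> a' \<oplus> s' \<otimes> b') (s' \<otimes> t') = loc_cls R p (t \<otimes> a \<oplus> s \<otimes> b) (s \<otimes> t)"
    if h: "(a',s') \<in> loc_cls R p a s" "(b',t') \<in> loc_cls R p b t" for a' s' b' t'
  proof -
    obtain u where u: "u \<in> carrier R - p" "u \<otimes> s' \<otimes> a = u \<otimes> s \<otimes> a'" using cls_memD(3)[OF h(1)] c by auto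
    obtain v where v: "v \<in> carrier R - p" "v \<otimes> t' \<otimes> b = v \<otimes> t \<otimes> b'" using cls_memD(3)[OF h(2)] c by auto
    have cc: "a' \<in> carrier R" "s' \<in> carrier R - p" "b' \<in> carrier R" "t' \<in> carrier R - p"
      using cls_memD[OF h(1)] cls_memD[OF h(2)] c by auto
    have cr: "u \<in> carrier R" "v \<in> carrier R" "s \<in> carrier R" "t \<in> carrier R" "a' \<in> carrier R"
      "s' \<in> carrier R" "b' \<in> carrier R" "t' \<in> carrier R" using u v c cc by auto
    have "(u \<otimes> v) \<otimes> (s \<otimes> t) \<otimes> (t' \<otimes> a' \<oplus> s' \<otimes> b') = (t \<otimes> t' \<otimes> v) \<otimes> (u \<otimes> s \<otimes> a') \<oplus> (s \<otimes> s' \<otimes> u) \<otimes> (v \<otimes> t \<otimes> b')"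
      using cr c(1,2) by algebra
    also have "\<dots> = (t \<otimes> t' \<otimes> v) \<otimes> (u \<otimes> s' \<otimes> a) \<oplus> (s \<otimes> s' \<otimes> u) \<otimes> (v \<otimes> t' \<otimes> b)" using u v by simp
    also have "\<dots> = (u \<otimes> v) \<otimes> (s' \<otimes> t') \<otimes> (t \<otimes> a \<oplus> s \<otimes> b)" using cr c(1,2) by algebra
    finally have E: "(u \<otimes> v) \<otimes> (s \<otimes> t) \<otimes> (t' \<otimes> a' \<oplus> s' \<otimes> b') = (u \<otimes> v) \<otimes> (s' \<otimes> t') \<otimes> (t \<otimes> a \<oplus> s \<otimes> b)" .
    have w: "u \<otimes> v \<in> carrier R - p" using prime_mult[OF P u(1) v(1)] .
    have m1: "t' \<otimes> a' \<oplus> s' \<otimes> b' \<in> carrier R" "t \<otimes> a \<oplus> s \<otimes> b \<in> carrier R" using cr c by auto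
    have m2: "s' \<otimes> t' \<in> carrier R - p" "s \<otimes> t \<in> carrier R - p" using prime_mult[OF P] cc c by auto
    show ?thesis using cls_eq[OF P m1 m2] E w by blast
  qed
  show ?thesis
    unfolding loc_ring_def apply simp
    using wd cls_refl[OF c(1) c(3) P] cls_refl[OF c(2) c(4) P] by blast
qed

lemma madd_cls:
  assumes P: "primeideal p R" and c: "m \<in> carrier M" "n \<in> carrier M" "s \<in> carrier R - p" "t \<in> carrier R - p"
  shows "mloc_cls R M p m s \<oplus>\<^bsub>loc_module R M p\<^esub> mloc_cls R M p n t
     = mloc_cls R M p (t \<odot>\<^bsub>M\<^esub> m \<oplus>\<^bsub>M\<^esub> s \<odot>\<^bsub>M\<^esub> n) (s \<otimes> t)"
proof -
  have wd: "mloc_cls R M p (t' \<odot>\<^bsub>M\<^esub> m' \<oplus>\<^bsub>M\<^esub> s' \<odot>\<^bsub>M\<^esub> n') (s' \<otimes> t')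
       = mloc_cls R M p (t \<odot>\<^bsub>M\<^esub> m \<oplus>\<^bsub>M\<^esub> s \<odot>\<^bsub>M\<^esub> n) (s \<otimes> t)"
    if h: "(m',s') \<in> mloc_cls R M p m s" "(n',t') \<in> mloc_cls R M p n t" for m' s' n' t'
  proof -
    obtain u where u: "u \<in> carrier R - p" "(u \<otimes> s') \<odot>\<^bsub>M\<^esub> m = (u \<otimes> s) \<odot>\<^bsub>M\<^esub> m'" using mcls_memD(3)[OF h(1)] c by auto
    obtain v where v: "v \<in> carrier R - p" "(v \<otimes> t') \<odot>\<^bsub>M\<^esub> n = (v \<otimes> t) \<odot>\<^bsub>M\<^esub> n'" using mcls_memD(3)[OF h(2)] c by auto
    have cc: "m' \<in> carrier M" "s' \<in> carrier R" "n' \<in> carrier M" "t' \<in> carrier R"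
      using mcls_memD[OF h(1)] mcls_memD[OF h(2)] c by auto
    have cr: "u \<in> carrier R" "v \<in> carrier R" "s \<in> carrier R" "t \<in> carrier R" using u v c by auto
    have "((u \<otimes> v) \<otimes> (s \<otimes> t)) \<odot>\<^bsub>M\<^esub> (t' \<odot>\<^bsub>M\<^esub> m' \<oplus>\<^bsub>M\<^esub> s' \<odot>\<^bsub>M\<^esub> n')
       = (v \<otimes> t \<otimes> t') \<odot>\<^bsub>M\<^esub> ((u \<otimes> s) \<odot>\<^bsub>M\<^esub> m') \<oplus>\<^bsub>M\<^esub> (u \<otimes> s \<otimes> s') \<odot>\<^bsub>M\<^esub> ((v \<otimes> t) \<odot>\<^bsub>M\<^esub> n')"
    proof -
      have "((u \<otimes> v) \<otimes> (s \<otimes> t)) \<odot>\<^bsub>M\<^esub> (t' \<odot>\<^bsub>M\<^esub> m' \<oplus>\<^bsub>M\<^esub> s' \<odot>\<^bsub>M\<^esub> n')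
         = (((u \<otimes> v) \<otimes> (s \<otimes> t)) \<otimes> t') \<odot>\<^bsub>M\<^esub> m' \<oplus>\<^bsub>M\<^esub> (((u \<otimes> v) \<otimes> (s \<otimes> t)) \<otimes> s') \<odot>\<^bsub>M\<^esub> n'"
        using cc cr by (simp add: smult_r_distr smult_assoc1)
      also have "((u \<otimes> v) \<otimes> (s \<otimes> t)) \<otimes> t' = (v \<otimes> t \<otimes> t') \<otimes> (u \<otimes> s)" using cc cr by algebra
      also have "((u \<otimes> v) \<otimes> (s \<otimes> t)) \<otimes> s' = (u \<otimes> s \<otimes> s') \<otimes> (v \<otimes> t)" using cc cr by algebra
      finally show ?thesis using cc cr by (simp add: smult_assoc1)
    qed
    also have "\<dots> = (v \<otimes> t \<otimes> t') \<odot>\<^bsub>M\<^esub> ((u \<otimes> s') \<odot>\<^bsub>M\<^esub> m) \<oplus>\<^bsub>M\<^esub> (u \<otimes> s \<otimes> s') \<odot>\<^bsub>M\<^esub> ((v \<otimes> t') \<odot>\<^bsub>M\<^esub> n)"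
      using u v by simp
    also have "\<dots> = ((u \<otimes> v) \<otimes> (s' \<otimes> t')) \<odot>\<^bsub>M\<^esub> (t \<odot>\<^bsub>M\<^esub> m \<oplus>\<^bsub>M\<^esub> s \<odot>\<^bsub>M\<^esub> n)"
    proof -
      have "((u \<otimes> v) \<otimes> (s' \<otimes> t')) \<odot>\<^bsub>M\<^esub> (t \<odot>\<^bsub>M\<^esub> m \<oplus>\<^bsub>M\<^esub> s \<odot>\<^bsub>M\<^esub> n)
         = (((u \<otimes> v) \<otimes> (s' \<otimes> t')) \<otimes> t) \<odot>\<^bsub>M\<^esub> m \<oplus>\<^bsub>M\<^esub> (((u \<otimes> v) \<otimes> (s' \<otimes> t')) \<otimes> s) \<odot>\<^bsub>M\<^esub> n"
        using cc cr c by (simp add: smult_r_distr smult_assoc1)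
      also have "((u \<otimes> v) \<otimes> (s' \<otimes> t')) \<otimes> t = (v \<otimes> t \<otimes> t') \<otimes> (u \<otimes> s')" using cc cr by algebra
      also have "((u \<otimes> v) \<otimes> (s' \<otimes> t')) \<otimes> s = (u \<otimes> s \<otimes> s') \<otimes> (v \<otimes> t')" using cc cr by algebra
      finally show ?thesis using cc cr c by (simp add: smult_assoc1)
    qed
    finally show ?thesis
      using mcls_eq[OF P, of "t' \<odot>\<^bsub>M\<^esub> m' \<oplus>\<^bsub>M\<^esub> s' \<odot>\<^bsub>M\<^esub> n'" "t \<odot>\<^bsub>M\<^esub> m \<oplus>\<^bsub>M\<^esub> s \<odot>\<^bsub>M\<^esub> n" "s' \<otimes> t'" "s \<otimes> t"]
        prime_mult[OF P] u v c cc mcls_memD(2)[OF h(1)] mcls_memD(2)[OF h(2)] cr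
      by (meson m_closed M.a_closed smult_closed)
  qed
  show ?thesis
    unfolding loc_module_def apply simp
    using wd mcls_refl[OF c(1) c(3) P] mcls_refl[OF c(2) c(4) P] by blast
qed

lemma smult_cls:
  assumes P: "primeideal p R" and c: "a \<in> carrier R" "m \<in> carrier M" "s \<in> carrier R - p" "t \<in> carrier R - p"
  shows "loc_cls R p a s \<odot>\<^bsub>loc_module R M p\<^esub> mloc_cls R M p m t = mloc_cls R M p (a \<odot>\<^bsub>M\<^esub> m) (s \<otimes> t)"
proof -
  have wd: "mloc_cls R M p (a' \<odot>\<^bsub>M\<^esub> m') (s' \<otimes> t') = mloc_cls R M p (a \<odot>\<^bsub>M\<^esub> m) (s \<otimes> t)"
    if h: "(a',s') \<in> loc_cls R p a s" "(m',t') \<in> mloc_cls R M p m t" for a' s' m' t'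
  proof -
    obtain u where u: "u \<in> carrier R - p" "u \<otimes> s' \<otimes> a = u \<otimes> s \<otimes> a'" using cls_memD(3)[OF h(1)] c by auto
    obtain v where v: "v \<in> carrier R - p" "(v \<otimes> t') \<odot>\<^bsub>M\<^esub> m = (v \<otimes> t) \<odot>\<^bsub>M\<^esub> m'" using mcls_memD(3)[OF h(2)] c by auto
    have cc: "a' \<in> carrier R" "s' \<in> carrier R" "m' \<in> carrier M" "t' \<in> carrier R"
      using cls_memD[OF h(1)] mcls_memD[OF h(2)] c by auto
    have cr: "u \<in> carrier R" "v \<in> carrier R" "s \<in> carrier R" "t \<in> carrier R" using u v c by auto
    have "((u \<otimes> v) \<otimes> (s \<otimes> t)) \<odot>\<^bsub>M\<^esub> (a' \<odot>\<^bsub>M\<^esub> m') = (u \<otimes> s \<otimes> a') \<odot>\<^bsub>M\<^esub> ((v \<otimes> t) \<odot>\<^bsub>M\<^esub> m')"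
    proof -
      have "(u \<otimes> s \<otimes> a') \<otimes> (v \<otimes> t) = ((u \<otimes> v) \<otimes> (s \<otimes> t)) \<otimes> a'" using cc cr by algebra
      then show ?thesis using cc cr by (simp add: smult_assoc1[symmetric])
    qed
    also have "\<dots> = (u \<otimes> s' \<otimes> a) \<odot>\<^bsub>M\<^esub> ((v \<otimes> t') \<odot>\<^bsub>M\<^esub> m)" using u v by simp
    also have "\<dots> = ((u \<otimes> v) \<otimes> (s' \<otimes> t')) \<odot>\<^bsub>M\<^esub> (a \<odot>\<^bsub>M\<^esub> m)"
    proof -
      have "(u \<otimes> s' \<otimes> a) \<otimes> (v \<otimes> t') = ((u \<otimes> v) \<otimes> (s' \<otimes> t')) \<otimes> a" using cc cr c by algebra
      then show ?thesis using cc cr c by (simp add: smult_assoc1[symmetric])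
    qed
    finally show ?thesis
      using mcls_eq[OF P, of "a' \<odot>\<^bsub>M\<^esub> m'" "a \<odot>\<^bsub>M\<^esub> m" "s' \<otimes> t'" "s \<otimes> t"]
        prime_mult[OF P] u v c cc cls_memD(2)[OF h(1)] mcls_memD(2)[OF h(2)] cr
      by (meson m_closed smult_closed)
  qed
  show ?thesis
    unfolding loc_module_def apply simp
    using wd cls_refl[OF c(1) c(3) P] mcls_refl[OF c(2) c(4) P] by blast
qed

end


context LG begin

lemma prime_notin_mult: "primeideal p R \<Longrightarrow> s \<in> carrier R \<Longrightarrow> t \<in> carrier R \<Longrightarrow> s \<notin> p \<Longrightarrow> t \<notin> p \<Longrightarrow> s \<otimes> t \<notin> p"
  using prime_mult[of p s t] by auto

lemma carr_loc: "x \<in> carrier (loc_ring R p) \<longleftrightarrow> (\<exists>a s. a \<in> carrier R \<and> s \<in> carrier R - p \<and> x = loc_cls R p a s)"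
  by (auto simp: loc_ring_def)

lemma carr_locE: assumes "x \<in> carrier (loc_ring R p)"
  obtains a s where "a \<in> carrier R" "s \<in> carrier R" "s \<notin> p" "x = loc_cls R p a s"
  using assms carr_loc by blast

lemma carr_locI: "a \<in> carrier R \<Longrightarrow> s \<in> carrier R \<Longrightarrow> s \<notin> p \<Longrightarrow> loc_cls R p a s \<in> carrier (loc_ring R p)"
  using carr_loc by blast

lemma one_loc: "\<one>\<^bsub>loc_ring R p\<^esub> = loc_cls R p \<one> \<one>" by (simp add: loc_ring_def)
lemma zero_loc: "\<zero>\<^bsub>loc_ring R p\<^esub> = loc_cls R p \<zero> \<one>" by (simp add: loc_ring_def)

lemma carr_mod: "x \<in> carrier (loc_module R M p) \<longleftrightarrow> (\<exists>m s. m \<in> carrier M \<and> s \<in> carrier R - p \<and> x = mloc_cls R M p m s)"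
  by (auto simp: loc_module_def)

lemma carr_modE: assumes "x \<in> carrier (loc_module R M p)"
  obtains m s where "m \<in> carrier M" "s \<in> carrier R" "s \<notin> p" "x = mloc_cls R M p m s"
  using assms carr_mod by blast

lemma carr_modI: "m \<in> carrier M \<Longrightarrow> s \<in> carrier R \<Longrightarrow> s \<notin> p \<Longrightarrow> mloc_cls R M p m s \<in> carrier (loc_module R M p)"
  using carr_mod by blast

lemma zero_mod: "\<zero>\<^bsub>loc_module R M p\<^esub> = mloc_cls R M p \<zero>\<^bsub>M\<^esub> \<one>" by (simp add: loc_module_def)

lemma cls_cong: "a = b \<Longrightarrow> s = t \<Longrightarrow> loc_cls R p a s = loc_cls R p b t" by simp

lemma cls_eq1:
  assumes P: "primeideal p R" "a \<in> carrier R" "b \<in> carrier R" "s \<in> carrier R" "s \<notin> p" "t \<in> carrier R" "t \<notin> p"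
   and "t \<otimes> a = s \<otimes> b"
  shows "loc_cls R p a s = loc_cls R p b t"
  using assms cls_eq[of p a b s t] prime_S1[OF P(1)] by (auto intro!: bexI[of _ \<one>])

lemmas locsimps = mult_cls add_cls prime_notin_mult one_loc zero_loc

lemma loc_cring: assumes P: "primeideal p R" shows "cring (loc_ring R p)"
proof (rule cringI)
  note ps = prime_notin_mult[OF P]
  show "abelian_group (loc_ring R p)"
  proof (rule abelian_groupI)
    fix x y assume "x \<in> carrier (loc_ring R p)" "y \<in> carrier (loc_ring R p)"
    then show "x \<oplus>\<^bsub>loc_ring R p\<^esub> y \<in> carrier (loc_ring R p)"
      by (elim carr_locE) (simp add: add_cls P ps carr_locI)
  next
    show "\<zero>\<^bsub>loc_ring R p\<^esub> \<in> carrier (loc_ring R p)"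
      using prime_one[OF P] by (simp add: zero_loc carr_locI)
  next
    fix x y z assume "x \<in> carrier (loc_ring R p)" "y \<in> carrier (loc_ring R p)" "z \<in> carrier (loc_ring R p)"
    then show "x \<oplus>\<^bsub>loc_ring R p\<^esub> y \<oplus>\<^bsub>loc_ring R p\<^esub> z = x \<oplus>\<^bsub>loc_ring R p\<^esub> (y \<oplus>\<^bsub>loc_ring R p\<^esub> z)"
      apply (elim carr_locE) apply (simp add: add_cls P ps)
      apply (rule cls_cong) apply ((thin_tac "_ = loc_cls R p _ _")+, algebra)+ done
  next
    fix x y assume "x \<in> carrier (loc_ring R p)" "y \<in> carrier (loc_ring R p)"
    then show "x \<oplus>\<^bsub>loc_ring R p\<^esub> y = y \<oplus>\<^bsub>loc_ring R p\<^esub> x"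
      apply (elim carr_locE) apply (simp add: add_cls P ps)
      apply (rule cls_cong) apply ((thin_tac "_ = loc_cls R p _ _")+, algebra)+ done
  next
    fix x assume "x \<in> carrier (loc_ring R p)"
    then show "\<zero>\<^bsub>loc_ring R p\<^esub> \<oplus>\<^bsub>loc_ring R p\<^esub> x = x"
      using prime_one[OF P] apply (elim carr_locE) apply (simp add: add_cls P ps zero_loc)
      done
  next
    fix x assume "x \<in> carrier (loc_ring R p)"
    then show "\<exists>y\<in>carrier (loc_ring R p). y \<oplus>\<^bsub>loc_ring R p\<^esub> x = \<zero>\<^bsub>loc_ring R p\<^esub>"
    proof (elim carr_locE)
      fix a s assume h: "a \<in> carrier R" "s \<in> carrier R" "s \<notin> p" "x = loc_cls R p a s"
      have "loc_cls R p (\<ominus> a) s \<oplus>\<^bsub>loc_ring R p\<^esub> x = \<zero>\<^bsub>loc_ring R p\<^esub>"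
        using h prime_one[OF P] apply (simp add: add_cls P ps zero_loc)
        apply (rule cls_eq1[OF P]) apply (auto simp: ps)
        apply ((thin_tac "_ = loc_cls R p _ _")+)? by algebra
      then show ?thesis using h by (intro bexI[of _ "loc_cls R p (\<ominus> a) s"]) (auto intro: carr_locI)
    qed
  qed
next
  note ps = prime_notin_mult[OF P]
  show "comm_monoid (loc_ring R p)"
  proof (rule comm_monoidI)
    fix x y assume "x \<in> carrier (loc_ring R p)" "y \<in> carrier (loc_ring R p)"
    then show "x \<otimes>\<^bsub>loc_ring R p\<^esub> y \<in> carrier (loc_ring R p)"
      by (elim carr_locE) (simp add: mult_cls P ps carr_locI)
  next
    show "\<one>\<^bsub>loc_ring R p\<^esub> \<in> carrier (loc_ring R p)"
      using prime_one[OF P] by (simp add: one_loc carr_locI)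
  next
    fix x y z assume "x \<in> carrier (loc_ring R p)" "y \<in> carrier (loc_ring R p)" "z \<in> carrier (loc_ring R p)"
    then show "x \<otimes>\<^bsub>loc_ring R p\<^esub> y \<otimes>\<^bsub>loc_ring R p\<^esub> z = x \<otimes>\<^bsub>loc_ring R p\<^esub> (y \<otimes>\<^bsub>loc_ring R p\<^esub> z)"
      apply (elim carr_locE) apply (simp add: mult_cls P ps)
      apply (rule cls_cong) apply ((thin_tac "_ = loc_cls R p _ _")+, algebra)+ done
  next
    fix x assume "x \<in> carrier (loc_ring R p)"
    then show "\<one>\<^bsub>loc_ring R p\<^esub> \<otimes>\<^bsub>loc_ring R p\<^esub> x = x"
      using prime_one[OF P] apply (elim carr_locE) by (simp add: mult_cls P ps one_loc)
  next
    fix x y assume "x \<in> carrier (loc_ring R p)" "y \<in> carrier (loc_ring R p)"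
    then show "x \<otimes>\<^bsub>loc_ring R p\<^esub> y = y \<otimes>\<^bsub>loc_ring R p\<^esub> x"
      apply (elim carr_locE) apply (simp add: mult_cls P ps)
      apply (rule cls_cong) apply ((thin_tac "_ = loc_cls R p _ _")+, algebra)+ done
  qed
next
  note ps = prime_notin_mult[OF P]
  fix x y z assume "x \<in> carrier (loc_ring R p)" "y \<in> carrier (loc_ring R p)" "z \<in> carrier (loc_ring R p)"
  then show "(x \<oplus>\<^bsub>loc_ring R p\<^esub> y) \<otimes>\<^bsub>loc_ring R p\<^esub> z = x \<otimes>\<^bsub>loc_ring R p\<^esub> z \<oplus>\<^bsub>loc_ring R p\<^esub> y \<otimes>\<^bsub>loc_ring R p\<^esub> z"
    apply (elim carr_locE) apply (simp add: mult_cls add_cls P ps)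
    apply (rule cls_eq1[OF P]) apply (auto simp: ps)
    apply ((thin_tac "_ = loc_cls R p _ _")+)? by algebra
qed

end


context LG begin

definition PL :: "'a set \<Rightarrow> 'a set \<Rightarrow> ('a \<times> 'a) set set" where
  "PL q p = {loc_cls R q a s | a s. a \<in> p \<and> s \<in> carrier R - q}"

lemma PL_mem:
  assumes Q: "primeideal q R" and P: "primeideal p R" and pq: "p \<subseteq> q"
    and c: "a \<in> carrier R" "s \<in> carrier R" "s \<notin> q"
  shows "loc_cls R q a s \<in> PL q p \<longleftrightarrow> a \<in> p"
proof
  assume "a \<in> p" then show "loc_cls R q a s \<in> PL q p" using c unfolding PL_def by blast
next
  assume "loc_cls R q a s \<in> PL q p"
  then obtain b t where bt: "b \<in> p" "t \<in> carrier R - q" "loc_cls R q a s = loc_cls R q b t"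
    unfolding PL_def by blast
  have bc: "b \<in> carrier R" using bt(1) prime_sub[OF P] by auto
  obtain u where u: "u \<in> carrier R - q" "u \<otimes> t \<otimes> a = u \<otimes> s \<otimes> b"
    using cls_eq[OF Q c(1) bc _ bt(2)] bt(3) c by auto
  have "(u \<otimes> s) \<otimes> b \<in> p" using bt(1) u c
    by (simp add: ideal.I_l_closed primeideal.axioms(1)[OF P])
  then have "(u \<otimes> t) \<otimes> a \<in> p" using u by simp
  moreover have "u \<otimes> t \<notin> p" using prime_notin_mult[OF P] u bt(2) pq by auto
  ultimately show "a \<in> p" using primeideal.I_prime[OF P, of "u \<otimes> t" a] u bt(2) c by auto
qed

lemma a_inv_loc:
  assumes P: "primeideal p R" and c: "a \<in> carrier R" "s \<in> carrier R" "s \<notin> p"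
  shows "\<ominus>\<^bsub>loc_ring R p\<^esub> loc_cls R p a s = loc_cls R p (\<ominus> a) s"
proof -
  interpret L: cring "loc_ring R p" by (rule loc_cring[OF P])
  have "loc_cls R p (\<ominus> a) s \<oplus>\<^bsub>loc_ring R p\<^esub> loc_cls R p a s = \<zero>\<^bsub>loc_ring R p\<^esub>"
    using c prime_one[OF P] apply (simp add: add_cls P prime_notin_mult zero_loc)
    apply (rule cls_eq1[OF P]) apply (auto simp: prime_notin_mult[OF P])
    by algebra
  then show ?thesis using c by (intro L.minus_equality) (auto intro: carr_locI)
qed

lemma PL_ideal:
  assumes Q: "primeideal q R" and P: "primeideal p R" and pq: "p \<subseteq> q"
  shows "ideal (PL q p) (loc_ring R q)"
proof -
  interpret L: cring "loc_ring R q" by (rule loc_cring[OF Q])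
  have sub: "PL q p \<subseteq> carrier (loc_ring R q)"
    using prime_sub[OF P] unfolding PL_def by (auto intro!: carr_locI)
  have z: "\<zero>\<^bsub>loc_ring R q\<^esub> \<in> PL q p"
    unfolding zero_loc PL_def using prime_one[OF Q]
      additive_subgroup.zero_closed[OF ideal.axioms(1)[OF primeideal.axioms(1)[OF P]]] by auto
  show ?thesis
  proof (rule idealI)
    show "ring (loc_ring R q)" by (rule L.ring_axioms)
  next
    show "subgroup (PL q p) (add_monoid (loc_ring R q))"
    proof (rule L.add.subgroupI, goal_cases)
      case 1 show ?case using sub by simp
    next
      case 2 show ?case using z by auto
    next
      case (3 x)
      then have "x \<in> PL q p" by simp
      then obtain a s where h: "a \<in> p" "s \<in> carrier R" "s \<notin> q" "x = loc_cls R q a s" unfolding PL_def by blast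
      have ac: "a \<in> carrier R" using h prime_sub[OF P] by auto
      have "\<ominus>\<^bsub>loc_ring R q\<^esub> x = loc_cls R q (\<ominus> a) s" using a_inv_loc[OF Q ac h(2,3)] h by simp
      moreover have "\<ominus> a \<in> p"
        using h additive_subgroup.a_inv_closed[OF ideal.axioms(1)[OF primeideal.axioms(1)[OF P]]] by auto
      ultimately show ?case
        using h unfolding PL_def a_inv_def by auto
    next
      case (4 x y)
      then have "x \<in> PL q p" "y \<in> PL q p" by auto
      then obtain a s b t where h: "a \<in> p" "s \<in> carrier R" "s \<notin> q" "x = loc_cls R q a s"
        "b \<in> p" "t \<in> carrier R" "t \<notin> q" "y = loc_cls R q b t" unfolding PL_def by blast
      have ac: "a \<in> carrier R" "b \<in> carrier R" using h prime_sub[OF P] by auto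
      have "t \<otimes> a \<oplus> s \<otimes> b \<in> p"
        using h ac ideal.I_l_closed[OF primeideal.axioms(1)[OF P]]
          additive_subgroup.a_closed[OF ideal.axioms(1)[OF primeideal.axioms(1)[OF P]]] by auto
      then show ?case
        using h ac prime_notin_mult[OF Q] unfolding PL_def by (auto simp: add_cls[OF Q])
    qed
  next
    fix x y assume "x \<in> PL q p" "y \<in> carrier (loc_ring R q)"
    then obtain a s b t where h: "a \<in> p" "s \<in> carrier R" "s \<notin> q" "x = loc_cls R q a s"
        "b \<in> carrier R" "t \<in> carrier R" "t \<notin> q" "y = loc_cls R q b t" unfolding PL_def
      by (auto elim!: carr_locE)
    have ac: "a \<in> carrier R" using h prime_sub[OF P] by auto
    have "b \<otimes> a \<in> p" "a \<otimes> b \<in> p" using h ac ideal.I_l_closed[OF primeideal.axioms(1)[OF P]]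
       ideal.I_r_closed[OF primeideal.axioms(1)[OF P]] by auto
    then show "y \<otimes>\<^bsub>loc_ring R q\<^esub> x \<in> PL q p" "x \<otimes>\<^bsub>loc_ring R q\<^esub> y \<in> PL q p"
      using h ac prime_notin_mult[OF Q] unfolding PL_def by (auto simp: mult_cls[OF Q])
  qed
qed

lemma ext_ideal_PL:
  assumes Q: "primeideal q R" and P: "primeideal p R" and pq: "p \<subseteq> q"
  shows "ext_ideal R q p = PL q p"
proof -
  interpret L: cring "loc_ring R q" by (rule loc_cring[OF Q])
  have S: "(\<lambda>a. loc_cls R q a \<one>) ` p \<subseteq> carrier (loc_ring R q)"
    using prime_sub[OF P] prime_one[OF Q] by (auto intro!: carr_locI)
  have S2: "(\<lambda>a. loc_cls R q a \<one>) ` p \<subseteq> PL q p"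
    using prime_one[OF Q] unfolding PL_def by auto
  show ?thesis
  proof
    show "ext_ideal R q p \<subseteq> PL q p" unfolding ext_ideal_def
      by (rule L.genideal_minimal[OF PL_ideal[OF Q P pq] S2])
  next
    show "PL q p \<subseteq> ext_ideal R q p"
    proof
      fix x assume "x \<in> PL q p"
      then obtain a s where h: "a \<in> p" "s \<in> carrier R" "s \<notin> q" "x = loc_cls R q a s" unfolding PL_def by blast
      have ac: "a \<in> carrier R" using h prime_sub[OF P] by auto
      have "loc_cls R q \<one> s \<otimes>\<^bsub>loc_ring R q\<^esub> loc_cls R q a \<one> = loc_cls R q a s"
        using h ac prime_one[OF Q] by (simp add: mult_cls[OF Q])
      moreover have "loc_cls R q a \<one> \<in> ext_ideal R q p"
        unfolding ext_ideal_def using L.genideal_self[OF S] h by auto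
      moreover have "loc_cls R q \<one> s \<in> carrier (loc_ring R q)" using h by (auto intro: carr_locI)
      ultimately show "x \<in> ext_ideal R q p" using h
        ideal.I_l_closed[OF L.genideal_ideal[OF S]] unfolding ext_ideal_def by metis
    qed
  qed
qed

lemma PL_prime:
  assumes P: "primeideal p R"
  shows "primeideal (PL p p) (loc_ring R p)"
proof (rule primeidealI)
  show "ideal (PL p p) (loc_ring R p)" by (rule PL_ideal[OF P P order_refl])
  show "cring (loc_ring R p)" by (rule loc_cring[OF P])
  have "loc_cls R p \<one> \<one> \<notin> PL p p" using PL_mem[OF P P order_refl, of \<one> \<one>] prime_one[OF P] by auto
  moreover have "loc_cls R p \<one> \<one> \<in> carrier (loc_ring R p)" using prime_one[OF P] by (auto intro: carr_locI)
  ultimately show "carrier (loc_ring R p) \<noteq> PL p p" by auto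
next
  fix x y assume "x \<in> carrier (loc_ring R p)" "y \<in> carrier (loc_ring R p)" "x \<otimes>\<^bsub>loc_ring R p\<^esub> y \<in> PL p p"
  then obtain a s b t where h: "a \<in> carrier R" "s \<in> carrier R" "s \<notin> p" "x = loc_cls R p a s"
        "b \<in> carrier R" "t \<in> carrier R" "t \<notin> p" "y = loc_cls R p b t"
        "loc_cls R p (a \<otimes> b) (s \<otimes> t) \<in> PL p p"
    by (auto elim!: carr_locE simp: mult_cls[OF P])
  then have "a \<otimes> b \<in> p" using PL_mem[OF P P order_refl, of "a \<otimes> b" "s \<otimes> t"] prime_notin_mult[OF P] by auto
  then have "a \<in> p \<or> b \<in> p" using primeideal.I_prime[OF P] h by auto
  then show "x \<in> PL p p \<or> y \<in> PL p p" using h PL_mem[OF P P order_refl] by auto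
qed

lemma inv_loc:
  assumes P: "primeideal p R" and c: "a \<in> carrier R" "a \<notin> p" "s \<in> carrier R" "s \<notin> p"
  shows "inv\<^bsub>loc_ring R p\<^esub> loc_cls R p a s = loc_cls R p s a"
proof -
  interpret L: cring "loc_ring R p" by (rule loc_cring[OF P])
  have "loc_cls R p a s \<otimes>\<^bsub>loc_ring R p\<^esub> loc_cls R p s a = \<one>\<^bsub>loc_ring R p\<^esub>"
    using c prime_one[OF P] apply (simp add: mult_cls P prime_notin_mult one_loc)
    apply (rule cls_eq1[OF P]) apply (auto simp: prime_notin_mult[OF P])
    by algebra
  then show ?thesis using c by (intro L.comm_inv_char) (auto intro: carr_locI)
qed

lemma ring_locmap_cls:
  assumes Q: "primeideal q R" and P: "primeideal p R" and pq: "p \<subseteq> q"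
    and c: "a \<in> carrier R" "s \<in> carrier R" "s \<notin> q"
  shows "ring_locmap R p (loc_cls R q a s) = loc_cls R p a s"
proof -
  have "loc_cls R p b t = loc_cls R p a s" if h: "(b,t) \<in> loc_cls R q a s" for b t
  proof -
    obtain u where u: "u \<in> carrier R - q" "u \<otimes> t \<otimes> a = u \<otimes> s \<otimes> b" "b \<in> carrier R" "t \<in> carrier R - q"
      using cls_memD[OF h c(1,2)] by auto
    then show ?thesis using cls_eq[OF P c(1) u(3), of s t] c pq by auto
  qed
  moreover have "(a,s) \<in> loc_cls R q a s" using cls_refl[OF c(1) _ Q] c by auto
  ultimately show ?thesis unfolding ring_locmap_def by blast
qed

lemma mod_locmap_cls:
  assumes Q: "primeideal q R" and P: "primeideal p R" and pq: "p \<subseteq> q"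
    and c: "m \<in> carrier M" "s \<in> carrier R" "s \<notin> q"
  shows "mod_locmap R M p (mloc_cls R M q m s) = mloc_cls R M p m s"
proof -
  have "mloc_cls R M p n t = mloc_cls R M p m s" if h: "(n,t) \<in> mloc_cls R M q m s" for n t
  proof -
    obtain u where u: "u \<in> carrier R - q" "(u \<otimes> t) \<odot>\<^bsub>M\<^esub> m = (u \<otimes> s) \<odot>\<^bsub>M\<^esub> n" "n \<in> carrier M" "t \<in> carrier R - q"
      using mcls_memD[OF h c(1,2)] by auto
    then show ?thesis using mcls_eq[OF P c(1) u(3), of s t] c pq by auto
  qed
  moreover have "(m,s) \<in> mloc_cls R M q m s" using mcls_refl[OF c(1) _ Q] c by auto
  ultimately show ?thesis unfolding mod_locmap_def by blast
qed

end



lemma submod_props: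
  assumes "submodule H K N"
  shows "H \<subseteq> carrier N" "\<zero>\<^bsub>N\<^esub> \<in> H"
    "\<And>x y. x \<in> H \<Longrightarrow> y \<in> H \<Longrightarrow> x \<oplus>\<^bsub>N\<^esub> y \<in> H"
    "\<And>a x. a \<in> carrier K \<Longrightarrow> x \<in> H \<Longrightarrow> a \<odot>\<^bsub>N\<^esub> x \<in> H"
proof -
  have sg: "subgroup H (add_monoid N)" by (rule submodule.axioms(1)[OF assms])
  show "H \<subseteq> carrier N" using subgroup.subset[OF sg] by simp
  show "\<zero>\<^bsub>N\<^esub> \<in> H" using subgroup.one_closed[OF sg] by simp
  show "\<And>x y. x \<in> H \<Longrightarrow> y \<in> H \<Longrightarrow> x \<oplus>\<^bsub>N\<^esub> y \<in> H" using subgroup.m_closed[OF sg] by simp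
  show "\<And>a x. a \<in> carrier K \<Longrightarrow> x \<in> H \<Longrightarrow> a \<odot>\<^bsub>N\<^esub> x \<in> H" by (rule submodule.smult_closed[OF assms])
qed

context LG begin

lemma submoduleI':
  assumes "N \<subseteq> carrier M" "\<zero>\<^bsub>M\<^esub> \<in> N" "\<And>x y. x \<in> N \<Longrightarrow> y \<in> N \<Longrightarrow> x \<oplus>\<^bsub>M\<^esub> y \<in> N"
    "\<And>a x. a \<in> carrier R \<Longrightarrow> x \<in> N \<Longrightarrow> a \<odot>\<^bsub>M\<^esub> x \<in> N"
  shows "submodule N R M"
proof (intro submodule.intro submodule_axioms.intro)
  show "subgroup N (add_monoid M)"
  proof (rule M.add.subgroupI, goal_cases)
    case 1 then show ?case using assms by simp
  next
    case 2 then show ?case using assms by auto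
  next
    case (3 x)
    then have x: "x \<in> N" by simp
    then have "(\<ominus> \<one>) \<odot>\<^bsub>M\<^esub> x \<in> N" using assms by auto
    moreover have "(\<ominus> \<one>) \<odot>\<^bsub>M\<^esub> x = \<ominus>\<^bsub>M\<^esub> x" using x assms(1) by (auto simp: smult_l_minus)
    ultimately show ?case by (simp add: a_inv_def)
  next
    case (4 x y) then show ?case using assms by simp
  qed
qed (use assms(4) in blast)

definition colon :: "'b set \<Rightarrow> 'b \<Rightarrow> 'a set" where
  "colon N x = {a \<in> carrier R. a \<odot>\<^bsub>M\<^esub> x \<in> N}"

definition sat :: "'a set \<Rightarrow> 'b set \<Rightarrow> 'b set" where
  "sat p N = {x \<in> carrier M. \<exists>s \<in> carrier R - p. s \<odot>\<^bsub>M\<^esub> x \<in> N}"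

definition G :: "('a set \<Rightarrow> ('b \<times> 'a) set set) \<Rightarrow> 'a set \<Rightarrow> 'b set" where
  "G J p = {x \<in> carrier M. mloc_cls R M p x \<one> \<in> J p}"

lemma ass_quot_iff: "q \<in> ass_quot R M N \<longleftrightarrow> primeideal q R \<and> (\<exists>x\<in>carrier M. q = colon N x)"
  unfolding ass_quot_def colon_def by (simp only: mem_Collect_eq)

lemma mcls_scale:
  assumes P: "primeideal p R" and c: "m \<in> carrier M" "s \<in> carrier R" "s \<notin> p"
  shows "mloc_cls R M p (s \<odot>\<^bsub>M\<^esub> m) s = mloc_cls R M p m \<one>"
proof -
  have "(\<one> \<otimes> \<one>) \<odot>\<^bsub>M\<^esub> (s \<odot>\<^bsub>M\<^esub> m) = (\<one> \<otimes> s) \<odot>\<^bsub>M\<^esub> m" using c by simp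
  then have "\<exists>u\<in>carrier R - p. (u \<otimes> \<one>) \<odot>\<^bsub>M\<^esub> (s \<odot>\<^bsub>M\<^esub> m) = (u \<otimes> s) \<odot>\<^bsub>M\<^esub> m"
    using prime_S1[OF P] by blast
  then show ?thesis using mcls_eq[OF P, of "s \<odot>\<^bsub>M\<^esub> m" m s \<one>] c prime_S1[OF P] by auto
qed

lemma U:
  assumes P: "primeideal p R" and JS: "submodule Jp (loc_ring R p) (loc_module R M p)"
    and c: "m \<in> carrier M" "s \<in> carrier R" "s \<notin> p"
  shows "mloc_cls R M p m s \<in> Jp \<longleftrightarrow> mloc_cls R M p m \<one> \<in> Jp"
proof -
  have o: "\<one> \<in> carrier R" "\<one> \<notin> p" using prime_one[OF P] by auto
  have e1: "loc_cls R p \<one> s \<odot>\<^bsub>loc_module R M p\<^esub> mloc_cls R M p m \<one> = mloc_cls R M p m s"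
    using c o by (simp add: smult_cls[OF P])
  have e2: "loc_cls R p s \<one> \<odot>\<^bsub>loc_module R M p\<^esub> mloc_cls R M p m s = mloc_cls R M p m \<one>"
    using c o by (simp add: smult_cls[OF P] mcls_scale[OF P])
  have c1: "loc_cls R p \<one> s \<in> carrier (loc_ring R p)" "loc_cls R p s \<one> \<in> carrier (loc_ring R p)"
    using carr_locI[of \<one> s p] carr_locI[of s \<one> p] c o by auto
  show ?thesis
  proof
    assume "mloc_cls R M p m s \<in> Jp"
    from submod_props(4)[OF JS c1(2) this] show "mloc_cls R M p m \<one> \<in> Jp" using e2 by simp
  next
    assume "mloc_cls R M p m \<one> \<in> Jp"
    from submod_props(4)[OF JS c1(1) this] show "mloc_cls R M p m s \<in> Jp" using e1 by simp
  qed
qed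

lemma G_sub: "G J p \<subseteq> carrier M" unfolding G_def by auto

lemma G_submodule:
  assumes P: "primeideal p R" and JS: "submodule (J p) (loc_ring R p) (loc_module R M p)"
  shows "submodule (G J p) R M"
proof (rule submoduleI')
  have o: "\<one> \<in> carrier R" "\<one> \<notin> p" using prime_one[OF P] by auto
  show "G J p \<subseteq> carrier M" by (rule G_sub)
  show "\<zero>\<^bsub>M\<^esub> \<in> G J p" using submod_props(2)[OF JS] unfolding G_def zero_mod by auto
  show "x \<oplus>\<^bsub>M\<^esub> y \<in> G J p" if "x \<in> G J p" "y \<in> G J p" for x y
  proof -
    have "mloc_cls R M p x \<one> \<oplus>\<^bsub>loc_module R M p\<^esub> mloc_cls R M p y \<one> = mloc_cls R M p (x \<oplus>\<^bsub>M\<^esub> y) \<one>"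
      using that o unfolding G_def by (simp add: madd_cls[OF P])
    moreover have "mloc_cls R M p x \<one> \<in> J p" "mloc_cls R M p y \<one> \<in> J p" "x \<in> carrier M" "y \<in> carrier M"
      using that unfolding G_def by auto
    ultimately have "mloc_cls R M p (x \<oplus>\<^bsub>M\<^esub> y) \<one> \<in> J p" using submod_props(3)[OF JS] by metis
    then show ?thesis using \<open>x \<in> carrier M\<close> \<open>y \<in> carrier M\<close> unfolding G_def by simp
  qed
  show "a \<odot>\<^bsub>M\<^esub> x \<in> G J p" if "a \<in> carrier R" "x \<in> G J p" for a x
  proof -
    have "loc_cls R p a \<one> \<odot>\<^bsub>loc_module R M p\<^esub> mloc_cls R M p x \<one> = mloc_cls R M p (a \<odot>\<^bsub>M\<^esub> x) \<one>"
      using that o unfolding G_def by (simp add: smult_cls[OF P])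
    moreover have "mloc_cls R M p x \<one> \<in> J p" "x \<in> carrier M"
      using that unfolding G_def by auto
    moreover have "loc_cls R p a \<one> \<in> carrier (loc_ring R p)" using carr_locI[of a \<one> p] o that by auto
    ultimately have "mloc_cls R M p (a \<odot>\<^bsub>M\<^esub> x) \<one> \<in> J p" using submod_props(4)[OF JS] by metis
    then show ?thesis using \<open>x \<in> carrier M\<close> that unfolding G_def by simp
  qed
qed

lemma G_sat:
  assumes P: "primeideal p R" and JS: "submodule (J p) (loc_ring R p) (loc_module R M p)"
    and "x \<in> carrier M" "s \<in> carrier R" "s \<notin> p" "s \<odot>\<^bsub>M\<^esub> x \<in> G J p"
  shows "x \<in> G J p"
  using assms U[OF P JS, of "s \<odot>\<^bsub>M\<^esub> x" s] mcls_scale[OF P, of x s] unfolding G_def by auto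

lemma sat_G:
  assumes P: "primeideal p R" and JS: "submodule (J p) (loc_ring R p) (loc_module R M p)"
  shows "sat p (G J p) = G J p"
proof
  show "sat p (G J p) \<subseteq> G J p" unfolding sat_def using G_sat[of p J, OF P JS] by blast
  show "G J p \<subseteq> sat p (G J p)"
  proof
    fix x assume x: "x \<in> G J p"
    then have "x \<in> carrier M" using G_sub by auto
    then show "x \<in> sat p (G J p)" unfolding sat_def using x prime_S1[OF P]
      by (auto intro!: bexI[of _ \<one>])
  qed
qed

lemma loc_sub_G:
  assumes P: "primeideal p R" and JS: "submodule (J p) (loc_ring R p) (loc_module R M p)"
  shows "loc_sub R M p (G J p) = J p"
proof
  show "loc_sub R M p (G J p) \<subseteq> J p"
  proof
    fix \<xi> assume "\<xi> \<in> loc_sub R M p (G J p)"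
    then obtain m s where h: "m \<in> G J p" "s \<in> carrier R - p" "\<xi> = mloc_cls R M p m s"
      unfolding loc_sub_def by blast
    then have "m \<in> carrier M" "mloc_cls R M p m \<one> \<in> J p" unfolding G_def by auto
    then show "\<xi> \<in> J p" using U[OF P JS, of m s] h by auto
  qed
  show "J p \<subseteq> loc_sub R M p (G J p)"
  proof
    fix \<xi> assume "\<xi> \<in> J p"
    moreover then have "\<xi> \<in> carrier (loc_module R M p)" using submod_props(1)[OF JS] by auto
    ultimately obtain m s where h: "m \<in> carrier M" "s \<in> carrier R" "s \<notin> p" "\<xi> = mloc_cls R M p m s" "\<xi> \<in> J p"
      by (auto elim!: carr_modE)
    then have "m \<in> G J p" using U[OF P JS h(1-3)] unfolding G_def by auto
    then show "\<xi> \<in> loc_sub R M p (G J p)" using h unfolding loc_sub_def by auto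
  qed
qed

lemma G_ass:
  assumes P: "primeideal p R" and JS: "submodule (J p) (loc_ring R p) (loc_module R M p)"
  shows "ext_ideal R p p \<in> ass_quot (loc_ring R p) (loc_module R M p) (J p) \<longleftrightarrow> p \<in> ass_quot R M (G J p)"
proof -
  have o: "\<one> \<in> carrier R" "\<one> \<notin> p" using prime_one[OF P] by auto
  have E: "ext_ideal R p p = PL p p" by (rule ext_ideal_PL[OF P P order_refl])
  have key: "loc_cls R p a s \<odot>\<^bsub>loc_module R M p\<^esub> mloc_cls R M p y t \<in> J p \<longleftrightarrow> a \<odot>\<^bsub>M\<^esub> y \<in> G J p"
    if "a \<in> carrier R" "s \<in> carrier R" "s \<notin> p" "y \<in> carrier M" "t \<in> carrier R" "t \<notin> p" for a s y t
  proof -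
    have e: "loc_cls R p a s \<odot>\<^bsub>loc_module R M p\<^esub> mloc_cls R M p y t = mloc_cls R M p (a \<odot>\<^bsub>M\<^esub> y) (s \<otimes> t)"
      using that by (simp add: smult_cls[OF P])
    have "s \<otimes> t \<notin> p" using prime_notin_mult[OF P] that by auto
    then have "mloc_cls R M p (a \<odot>\<^bsub>M\<^esub> y) (s \<otimes> t) \<in> J p \<longleftrightarrow> mloc_cls R M p (a \<odot>\<^bsub>M\<^esub> y) \<one> \<in> J p"
      using U[OF P JS, of "a \<odot>\<^bsub>M\<^esub> y" "s \<otimes> t"] that by auto
    then show ?thesis using e that unfolding G_def by auto
  qed
  show ?thesis
  proof
    assume "ext_ideal R p p \<in> ass_quot (loc_ring R p) (loc_module R M p) (J p)"
    then have "\<exists>\<xi>\<in>carrier (loc_module R M p). PL p p = {\<alpha> \<in> carrier (loc_ring R p). \<alpha> \<odot>\<^bsub>loc_module R M p\<^esub> \<xi> \<in> J p}"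
      unfolding ass_quot_def E by (simp only: mem_Collect_eq)
    then obtain \<xi> where xi: "\<xi> \<in> carrier (loc_module R M p)"
      "PL p p = {\<alpha> \<in> carrier (loc_ring R p). \<alpha> \<odot>\<^bsub>loc_module R M p\<^esub> \<xi> \<in> J p}"
      by blast
    then obtain m t where mt: "m \<in> carrier M" "t \<in> carrier R" "t \<notin> p" "\<xi> = mloc_cls R M p m t"
      by (auto elim!: carr_modE)
    have "p = colon (G J p) m"
    proof (rule Set.set_eqI)
      fix a
      show "a \<in> p \<longleftrightarrow> a \<in> colon (G J p) m"
      proof (cases "a \<in> carrier R")
        case True
        have "a \<in> p \<longleftrightarrow> loc_cls R p a \<one> \<in> PL p p" using PL_mem[OF P P order_refl True o(1,2)] by simp
        also have "\<dots> \<longleftrightarrow> loc_cls R p a \<one> \<odot>\<^bsub>loc_module R M p\<^esub> \<xi> \<in> J p"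
        proof -
          have "loc_cls R p a \<one> \<in> carrier (loc_ring R p)" using True o by (auto intro: carr_locI)
          then show ?thesis using xi(2) by blast
        qed
        also have "\<dots> \<longleftrightarrow> a \<odot>\<^bsub>M\<^esub> m \<in> G J p" using key[OF True o(1,2) mt(1-3)] mt(4) by simp
        finally show ?thesis using True unfolding colon_def by auto
      next
        case False then show ?thesis using prime_sub[OF P] unfolding colon_def by auto
      qed
    qed
    then show "p \<in> ass_quot R M (G J p)" using P mt(1) unfolding ass_quot_iff by blast
  next
    assume "p \<in> ass_quot R M (G J p)"
    then obtain y where y: "y \<in> carrier M" "p = colon (G J p) y" unfolding ass_quot_iff by blast
    have "PL p p = {\<alpha> \<in> carrier (loc_ring R p). \<alpha> \<odot>\<^bsub>loc_module R M p\<^esub> mloc_cls R M p y \<one> \<in> J p}"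
    proof (rule Set.set_eqI)
      fix \<alpha>
      show "\<alpha> \<in> PL p p \<longleftrightarrow> \<alpha> \<in> {\<alpha> \<in> carrier (loc_ring R p). \<alpha> \<odot>\<^bsub>loc_module R M p\<^esub> mloc_cls R M p y \<one> \<in> J p}"
      proof (cases "\<alpha> \<in> carrier (loc_ring R p)")
        case True
        then obtain a s where h: "a \<in> carrier R" "s \<in> carrier R" "s \<notin> p" "\<alpha> = loc_cls R p a s"
          by (auto elim!: carr_locE)
        have "\<alpha> \<in> PL p p \<longleftrightarrow> a \<in> p" using PL_mem[OF P P order_refl h(1-3)] h(4) by simp
        also have "\<dots> \<longleftrightarrow> a \<in> colon (G J p) y" using y(2) by blast
        also have "\<dots> \<longleftrightarrow> a \<odot>\<^bsub>M\<^esub> y \<in> G J p" using h unfolding colon_def by simp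
        also have "\<dots> \<longleftrightarrow> \<alpha> \<odot>\<^bsub>loc_module R M p\<^esub> mloc_cls R M p y \<one> \<in> J p"
          using key[OF h(1-3) y(1) o] h(4) by simp
        finally show ?thesis using True by blast
      next
        case False
        moreover have "PL p p \<subseteq> carrier (loc_ring R p)"
          using prime_sub[OF P] unfolding PL_def by (auto intro!: carr_locI)
        ultimately show ?thesis by blast
      qed
    qed
    moreover have "mloc_cls R M p y \<one> \<in> carrier (loc_module R M p)" using y(1) o by (auto intro!: carr_modI)
    ultimately show "ext_ideal R p p \<in> ass_quot (loc_ring R p) (loc_module R M p) (J p)"
      unfolding ass_quot_def E using PL_prime[OF P] by blast
  qed
qed

end


context LG begin

lemma sub_props:
  assumes "submodule N R M"
  shows "N \<subseteq> carrier M" "\<zero>\<^bsub>M\<^esub> \<in> N"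
    "\<And>x y. x \<in> N \<Longrightarrow> y \<in> N \<Longrightarrow> x \<oplus>\<^bsub>M\<^esub> y \<in> N"
    "\<And>a x. a \<in> carrier R \<Longrightarrow> x \<in> N \<Longrightarrow> a \<odot>\<^bsub>M\<^esub> x \<in> N"
  using submod_props[OF assms] by auto

lemma sat_F:
  assumes P: "primeideal p R" and F: "submodule F R M" and L: "loc_sub R M p F = J p"
  shows "G J p = sat p F"
proof
  show "G J p \<subseteq> sat p F"
  proof
    fix x assume "x \<in> G J p"
    then have x: "x \<in> carrier M" "mloc_cls R M p x \<one> \<in> loc_sub R M p F" using L unfolding G_def by auto
    then obtain m s where ms: "m \<in> F" "s \<in> carrier R - p" "mloc_cls R M p x \<one> = mloc_cls R M p m s"
      unfolding loc_sub_def by blast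
    have mc: "m \<in> carrier M" using ms(1) sub_props(1)[OF F] by auto
    obtain u where u: "u \<in> carrier R - p" "(u \<otimes> s) \<odot>\<^bsub>M\<^esub> x = (u \<otimes> \<one>) \<odot>\<^bsub>M\<^esub> m"
      using mcls_eq[OF P x(1) mc prime_S1[OF P] ms(2)] ms(3) by auto
    have "(u \<otimes> \<one>) \<odot>\<^bsub>M\<^esub> m \<in> F" using sub_props(4)[OF F _ ms(1)] u(1) by auto
    moreover have "u \<otimes> s \<in> carrier R - p" using prime_mult[OF P u(1) ms(2)] .
    ultimately have "(u \<otimes> s) \<odot>\<^bsub>M\<^esub> x \<in> F" "u \<otimes> s \<in> carrier R - p" using u(2) by auto
    then show "x \<in> sat p F" unfolding sat_def using x(1) by blast
  qed
  show "sat p F \<subseteq> G J p"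
  proof
    fix x assume "x \<in> sat p F"
    then obtain s where s: "x \<in> carrier M" "s \<in> carrier R - p" "s \<odot>\<^bsub>M\<^esub> x \<in> F" unfolding sat_def by blast
    have "mloc_cls R M p x \<one> = mloc_cls R M p (s \<odot>\<^bsub>M\<^esub> x) s" using mcls_scale[OF P s(1)] s(2) by auto
    then have "mloc_cls R M p x \<one> \<in> loc_sub R M p F" unfolding loc_sub_def using s by blast
    then show "x \<in> G J p" using L s(1) unfolding G_def by auto
  qed
qed

lemma sub_sat: assumes "submodule N R M" "primeideal p R" shows "N \<subseteq> sat p N"
proof
  fix x assume x: "x \<in> N"
  then have "x \<in> carrier M" using sub_props(1)[OF assms(1)] by auto
  then have "\<one> \<odot>\<^bsub>M\<^esub> x \<in> N" using x by simp
  then show "x \<in> sat p N" unfolding sat_def using \<open>x \<in> carrier M\<close> prime_S1[OF assms(2)] by blast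
qed

lemma loc_sub_sat:
  assumes P: "primeideal p R" and N: "submodule N R M"
  shows "loc_sub R M p (sat p N) = loc_sub R M p N"
proof
  show "loc_sub R M p N \<subseteq> loc_sub R M p (sat p N)" unfolding loc_sub_def using sub_sat[OF N P] by blast
  show "loc_sub R M p (sat p N) \<subseteq> loc_sub R M p N"
  proof
    fix \<xi> assume "\<xi> \<in> loc_sub R M p (sat p N)"
    then obtain m s t where h: "m \<in> carrier M" "t \<in> carrier R - p" "t \<odot>\<^bsub>M\<^esub> m \<in> N" "s \<in> carrier R - p"
      "\<xi> = mloc_cls R M p m s" unfolding loc_sub_def sat_def by blast
    have "(\<one> \<otimes> (t \<otimes> s)) \<odot>\<^bsub>M\<^esub> m = (\<one> \<otimes> s) \<odot>\<^bsub>M\<^esub> (t \<odot>\<^bsub>M\<^esub> m)"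
      using h by (simp add: smult_assoc1 m_comm)
    then have ex: "\<exists>u\<in>carrier R - p. (u \<otimes> (t \<otimes> s)) \<odot>\<^bsub>M\<^esub> m = (u \<otimes> s) \<odot>\<^bsub>M\<^esub> (t \<odot>\<^bsub>M\<^esub> m)"
      using prime_S1[OF P] by blast
    have tmc: "t \<odot>\<^bsub>M\<^esub> m \<in> carrier M" using h by auto
    have "mloc_cls R M p m s = mloc_cls R M p (t \<odot>\<^bsub>M\<^esub> m) (t \<otimes> s)"
      by (subst mcls_eq[OF P h(1) tmc h(4) prime_mult[OF P h(2,4)]]) (rule ex)
    then show "\<xi> \<in> loc_sub R M p N" unfolding loc_sub_def using h prime_mult[OF P h(2,4)] by blast
  qed
qed

lemma loc_sub_at_F:
  assumes Q: "primeideal q R" and P: "primeideal p R" and pq: "p \<subseteq> q" and F: "submodule F R M"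
  shows "loc_sub_at R M p q (loc_sub R M q F) = loc_sub R M p F"
proof
  have o: "\<one> \<in> carrier R" "\<one> \<notin> p" "\<one> \<notin> q" using prime_one[OF P] prime_one[OF Q] by auto
  show "loc_sub_at R M p q (loc_sub R M q F) \<subseteq> loc_sub R M p F"
  proof
    fix z assume "z \<in> loc_sub_at R M p q (loc_sub R M q F)"
    then obtain t x where tx: "t \<in> carrier (loc_ring R q)" "t \<notin> ext_ideal R q p" "x \<in> loc_sub R M q F"
      "z = inv\<^bsub>loc_ring R p\<^esub> (ring_locmap R p t) \<odot>\<^bsub>loc_module R M p\<^esub> mod_locmap R M p x"
      unfolding loc_sub_at_def by blast
    obtain a s where as: "a \<in> carrier R" "s \<in> carrier R" "s \<notin> q" "t = loc_cls R q a s"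
      using tx(1) by (auto elim: carr_locE)
    have ap: "a \<notin> p" using tx(2) PL_mem[OF Q P pq as(1-3)] ext_ideal_PL[OF Q P pq] as(4) by auto
    obtain m s' where ms: "m \<in> F" "s' \<in> carrier R - q" "x = mloc_cls R M q m s'"
      using tx(3) unfolding loc_sub_def by blast
    have mc: "m \<in> carrier M" using ms(1) sub_props(1)[OF F] by auto
    have sp: "s \<notin> p" "s' \<notin> p" using as ms pq by auto
    have s'c: "s' \<in> carrier R" and sq: "s' \<notin> q" using ms(2) by auto
    have "z = loc_cls R p s a \<odot>\<^bsub>loc_module R M p\<^esub> mloc_cls R M p m s'"
      unfolding tx(4) as(4) ms(3) ring_locmap_cls[OF Q P pq as(1-3)] mod_locmap_cls[OF Q P pq mc s'c sq] inv_loc[OF P as(1) ap as(2) sp(1)]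
      using ms(2) by (simp only: mod_locmap_cls[OF Q P pq mc s'c sq])
    also have "\<dots> = mloc_cls R M p (s \<odot>\<^bsub>M\<^esub> m) (a \<otimes> s')"
      using smult_cls[OF P as(2) mc] as ap ms sp by auto
    finally have zeq: "z = mloc_cls R M p (s \<odot>\<^bsub>M\<^esub> m) (a \<otimes> s')" .
    have "s \<odot>\<^bsub>M\<^esub> m \<in> F" using sub_props(4)[OF F as(2) ms(1)] .
    moreover have "a \<otimes> s' \<in> carrier R - p" using prime_notin_mult[OF P as(1) s'c ap sp(2)] as(1) s'c by auto
    ultimately show "z \<in> loc_sub R M p F"
      unfolding loc_sub_def zeq by blast
  qed
  show "loc_sub R M p F \<subseteq> loc_sub_at R M p q (loc_sub R M q F)"
  proof
    fix z assume "z \<in> loc_sub R M p F"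
    then obtain m s where ms: "m \<in> F" "s \<in> carrier R" "s \<notin> p" "z = mloc_cls R M p m s"
      unfolding loc_sub_def by blast
    have mc: "m \<in> carrier M" using ms(1) sub_props(1)[OF F] by auto
    have t1: "loc_cls R q s \<one> \<in> carrier (loc_ring R q)" using ms o by (auto intro: carr_locI)
    have t2: "loc_cls R q s \<one> \<notin> ext_ideal R q p" using PL_mem[OF Q P pq ms(2) o(1) o(3)] ext_ideal_PL[OF Q P pq] ms by auto
    have x1: "mloc_cls R M q m \<one> \<in> loc_sub R M q F" unfolding loc_sub_def using ms(1) o by blast
    have "inv\<^bsub>loc_ring R p\<^esub> (ring_locmap R p (loc_cls R q s \<one>)) \<odot>\<^bsub>loc_module R M p\<^esub> mod_locmap R M p (mloc_cls R M q m \<one>)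
        = loc_cls R p \<one> s \<odot>\<^bsub>loc_module R M p\<^esub> mloc_cls R M p m \<one>"
      using ring_locmap_cls[OF Q P pq ms(2) o(1) o(3)] mod_locmap_cls[OF Q P pq mc o(1) o(3)] inv_loc[OF P ms(2,3) o(1,2)]
      by simp
    also have "\<dots> = mloc_cls R M p (\<one> \<odot>\<^bsub>M\<^esub> m) (s \<otimes> \<one>)"
      by (rule smult_cls[OF P o(1) mc]) (use ms o in auto)
    also have "\<dots> = z" using mc ms by simp
    finally have eq: "inv\<^bsub>loc_ring R p\<^esub> (ring_locmap R p (loc_cls R q s \<one>)) \<odot>\<^bsub>loc_module R M p\<^esub> mod_locmap R M p (mloc_cls R M q m \<one>) = z" .
    show "z \<in> loc_sub_at R M p q (loc_sub R M q F)"
      unfolding loc_sub_at_def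
      apply (rule CollectI, rule exI[of _ "loc_cls R q s \<one>"], rule exI[of _ "mloc_cls R M q m \<one>"])
      apply (intro conjI)
        apply (rule eq[symmetric])
      using t1 t2 apply blast
      by (rule x1)
  qed
qed

lemma G_consistent:
  assumes Q: "primeideal q R" and P: "primeideal p R" and pq: "p \<subseteq> q"
    and JSq: "submodule (J q) (loc_ring R q) (loc_module R M q)"
    and JSp: "submodule (J p) (loc_ring R p) (loc_module R M p)"
    and C: "J p = loc_sub_at R M p q (J q)"
  shows "G J p = sat p (G J q)"
proof
  have o: "\<one> \<in> carrier R" "\<one> \<notin> p" "\<one> \<notin> q" using prime_one[OF P] prime_one[OF Q] by auto
  have GQ: "submodule (G J q) R M" by (rule G_submodule[of q J, OF Q JSq])
  show "G J p \<subseteq> sat p (G J q)"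
  proof
    fix x assume "x \<in> G J p"
    then have x: "x \<in> carrier M" "mloc_cls R M p x \<one> \<in> loc_sub_at R M p q (J q)" using C unfolding G_def by auto
    then obtain t \<xi> where tx: "t \<in> carrier (loc_ring R q)" "t \<notin> ext_ideal R q p" "\<xi> \<in> J q"
      "mloc_cls R M p x \<one> = inv\<^bsub>loc_ring R p\<^esub> (ring_locmap R p t) \<odot>\<^bsub>loc_module R M p\<^esub> mod_locmap R M p \<xi>"
      unfolding loc_sub_at_def by blast
    obtain a s where as: "a \<in> carrier R" "s \<in> carrier R" "s \<notin> q" "t = loc_cls R q a s"
      using tx(1) by (auto elim: carr_locE)
    have ap: "a \<notin> p" using tx(2) PL_mem[OF Q P pq as(1-3)] ext_ideal_PL[OF Q P pq] as(4) by auto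
    have "\<xi> \<in> carrier (loc_module R M q)" using tx(3) submod_props(1)[OF JSq] by auto
    then obtain m s' where ms: "m \<in> carrier M" "s' \<in> carrier R" "s' \<notin> q" "\<xi> = mloc_cls R M q m s'"
      by (auto elim: carr_modE)
    have mG: "m \<in> G J q" using U[OF Q JSq ms(1-3)] tx(3) ms(4) ms(1) unfolding G_def by auto
    have sp: "s \<notin> p" "s' \<notin> p" using as ms pq by auto
    have "mloc_cls R M p x \<one> = loc_cls R p s a \<odot>\<^bsub>loc_module R M p\<^esub> mloc_cls R M p m s'"
      unfolding tx(4) as(4) ms(4) ring_locmap_cls[OF Q P pq as(1-3)] mod_locmap_cls[OF Q P pq ms(1-3)] inv_loc[OF P as(1) ap as(2) sp(1)]
      by (rule refl)
    also have "\<dots> = mloc_cls R M p (s \<odot>\<^bsub>M\<^esub> m) (a \<otimes> s')"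
      using smult_cls[OF P as(2) ms(1)] as ap ms sp by auto
    finally have e: "mloc_cls R M p x \<one> = mloc_cls R M p (s \<odot>\<^bsub>M\<^esub> m) (a \<otimes> s')" .
    have as': "a \<otimes> s' \<in> carrier R - p" using prime_notin_mult[OF P as(1) ms(2) ap sp(2)] as ms by auto
    obtain v where v: "v \<in> carrier R - p" "(v \<otimes> (a \<otimes> s')) \<odot>\<^bsub>M\<^esub> x = (v \<otimes> \<one>) \<odot>\<^bsub>M\<^esub> (s \<odot>\<^bsub>M\<^esub> m)"
      using mcls_eq[OF P x(1) _ _ as'] e o as ms by auto
    have "(v \<otimes> \<one>) \<odot>\<^bsub>M\<^esub> (s \<odot>\<^bsub>M\<^esub> m) \<in> G J q"
      using sub_props(4)[OF GQ _ sub_props(4)[OF GQ as(2) mG]] v(1) by auto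
    moreover have "v \<otimes> (a \<otimes> s') \<in> carrier R - p" using prime_mult[OF P v(1) as'] .
    ultimately have "(v \<otimes> (a \<otimes> s')) \<odot>\<^bsub>M\<^esub> x \<in> G J q" "v \<otimes> (a \<otimes> s') \<in> carrier R - p" using v(2) by auto
    then show "x \<in> sat p (G J q)" unfolding sat_def using x(1) by blast
  qed
  show "sat p (G J q) \<subseteq> G J p"
  proof
    fix x assume "x \<in> sat p (G J q)"
    then obtain u where u: "x \<in> carrier M" "u \<in> carrier R" "u \<notin> p" "u \<odot>\<^bsub>M\<^esub> x \<in> G J q" unfolding sat_def by blast
    have uc: "u \<odot>\<^bsub>M\<^esub> x \<in> carrier M" using u by auto
    have t1: "loc_cls R q u \<one> \<in> carrier (loc_ring R q)" using u o by (auto intro: carr_locI)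
    have t2: "loc_cls R q u \<one> \<notin> ext_ideal R q p" using PL_mem[OF Q P pq u(2) o(1) o(3)] ext_ideal_PL[OF Q P pq] u by auto
    have x1: "mloc_cls R M q (u \<odot>\<^bsub>M\<^esub> x) \<one> \<in> J q" using u(4) unfolding G_def by auto
    have "inv\<^bsub>loc_ring R p\<^esub> (ring_locmap R p (loc_cls R q u \<one>)) \<odot>\<^bsub>loc_module R M p\<^esub> mod_locmap R M p (mloc_cls R M q (u \<odot>\<^bsub>M\<^esub> x) \<one>)
        = loc_cls R p \<one> u \<odot>\<^bsub>loc_module R M p\<^esub> mloc_cls R M p (u \<odot>\<^bsub>M\<^esub> x) \<one>"
      using ring_locmap_cls[OF Q P pq u(2) o(1) o(3)] mod_locmap_cls[OF Q P pq uc o(1) o(3)] inv_loc[OF P u(2,3) o(1,2)]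
      by simp
    also have "\<dots> = mloc_cls R M p (u \<odot>\<^bsub>M\<^esub> x) u" using smult_cls[OF P o(1) uc] u o by auto
    also have "\<dots> = mloc_cls R M p x \<one>" using mcls_scale[OF P u(1-3)] .
    finally have eq: "inv\<^bsub>loc_ring R p\<^esub> (ring_locmap R p (loc_cls R q u \<one>)) \<odot>\<^bsub>loc_module R M p\<^esub> mod_locmap R M p (mloc_cls R M q (u \<odot>\<^bsub>M\<^esub> x) \<one>) = mloc_cls R M p x \<one>" .
    have "mloc_cls R M p x \<one> \<in> loc_sub_at R M p q (J q)"
      unfolding loc_sub_at_def
      apply (rule CollectI, rule exI[of _ "loc_cls R q u \<one>"], rule exI[of _ "mloc_cls R M q (u \<odot>\<^bsub>M\<^esub> x) \<one>"])
      apply (intro conjI)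
        apply (rule eq[symmetric])
      using t1 t2 apply blast
      by (rule x1)
    then have "mloc_cls R M p x \<one> \<in> J p" by (simp only: C)
    then show "x \<in> G J p" using u(1) unfolding G_def by simp
  qed
qed

end


context LG begin

lemma R_cring: "cring R"
proof -
  have "module R M" using LG_axioms unfolding LG_def by simp
  then show ?thesis by (rule module.axioms(1))
qed

lemma R_ring: "ring R" using R_cring cring.axioms(1) by blast

lemma R_addgroup: "group (add_monoid R)"
  by (rule abelian_group.a_group[OF ring.is_abelian_group[OF R_ring]])

lemma idealI':
  assumes "I \<subseteq> carrier R" "\<zero> \<in> I" "\<And>a b. a \<in> I \<Longrightarrow> b \<in> I \<Longrightarrow> a \<oplus> b \<in> I"
    "\<And>a x. a \<in> I \<Longrightarrow> x \<in> carrier R \<Longrightarrow> x \<otimes> a \<in> I"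
  shows "ideal I R"
proof (rule idealI[OF R_ring])
  show "subgroup I (add_monoid R)"
  proof (rule group.subgroupI[OF R_addgroup], goal_cases)
    case 1 then show ?case using assms by simp
  next
    case 2 then show ?case using assms by auto
  next
    case (3 a)
    then have a: "a \<in> I" "a \<in> carrier R" using assms(1) by auto
    have "(\<ominus> \<one>) \<otimes> a \<in> I" using assms(4)[OF a(1)] by simp
    moreover have "(\<ominus> \<one>) \<otimes> a = \<ominus> a" using a(2) ring.l_minus[OF R_ring, of \<one> a] by simp
    ultimately show ?case by (simp add: a_inv_def)
  next
    case (4 a b) then show ?case using assms by simp
  qed
next
  fix a x assume "a \<in> I" "x \<in> carrier R"
  then show "x \<otimes> a \<in> I" using assms by simp
  moreover have "a \<otimes> x = x \<otimes> a" using \<open>a \<in> I\<close> \<open>x \<in> carrier R\<close> assms(1) m_comm by auto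
  ultimately show "a \<otimes> x \<in> I" by simp
qed

lemma colon_sub: "colon N x \<subseteq> carrier R" unfolding colon_def by auto

lemma colon_ideal:
  assumes N: "submodule N R M" and x: "x \<in> carrier M"
  shows "ideal (colon N x) R"
proof (rule idealI')
  show "colon N x \<subseteq> carrier R" by (rule colon_sub)
  show "\<zero> \<in> colon N x" unfolding colon_def using x sub_props(2)[OF N] by simp
  fix a b assume "a \<in> colon N x" "b \<in> colon N x"
  then show "a \<oplus> b \<in> colon N x" unfolding colon_def using x sub_props(3)[OF N]
    by (simp add: smult_l_distr)
next
  fix a c assume "a \<in> colon N x" "c \<in> carrier R"
  then show "c \<otimes> a \<in> colon N x" unfolding colon_def using x sub_props(4)[OF N]
    by (simp add: smult_assoc1)
qed

lemma colon_mult: "a \<in> carrier R \<Longrightarrow> b \<in> carrier R \<Longrightarrow> x \<in> carrier M \<Longrightarrow>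
   a \<in> colon N (b \<odot>\<^bsub>M\<^esub> x) \<longleftrightarrow> a \<otimes> b \<in> colon N x"
  unfolding colon_def by (simp add: smult_assoc1)

lemma colon_mono_mult:
  assumes N: "submodule N R M" and "x \<in> carrier M" "b \<in> carrier R"
  shows "colon N x \<subseteq> colon N (b \<odot>\<^bsub>M\<^esub> x)"
proof
  fix a assume "a \<in> colon N x"
  then have "a \<in> carrier R" "a \<odot>\<^bsub>M\<^esub> x \<in> N" unfolding colon_def by auto
  then have "b \<odot>\<^bsub>M\<^esub> (a \<odot>\<^bsub>M\<^esub> x) \<in> N" using sub_props(4)[OF N assms(3)] by auto
  then have "(a \<otimes> b) \<odot>\<^bsub>M\<^esub> x \<in> N" using assms \<open>a \<in> carrier R\<close> by (simp add: smult_assoc1[symmetric] m_comm)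
  then show "a \<in> colon N (b \<odot>\<^bsub>M\<^esub> x)" using colon_mult[of a b x N] assms \<open>a \<in> carrier R\<close>
    unfolding colon_def by auto
qed

lemma maxel:
  assumes "S \<noteq> {}" "\<And>I. I \<in> S \<Longrightarrow> ideal I R"
  shows "\<exists>I\<in>S. \<forall>J\<in>S. I \<subseteq> J \<longrightarrow> J = I"
proof (rule Zorn_Lemma2, rule ballI)
  fix C assume C: "C \<in> chains S"
  show "\<exists>V\<in>S. \<forall>Y\<in>C. Y \<subseteq> V"
  proof (cases "C = {}")
    case True then show ?thesis using assms(1) by auto
  next
    case False
    have CS: "C \<subseteq> S" and ch: "\<forall>A\<in>C. \<forall>B\<in>C. A \<subseteq> B \<or> B \<subseteq> A"
      using C unfolding chains_def chain_subset_def by auto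
    have "subset.chain {I. ideal I R} C"
      unfolding pred_on.chain_def using CS ch assms(2) by blast
    then have "\<Union>C \<in> C" using ideal_chain_is_trivial False by blast
    then show ?thesis using CS by blast
  qed
qed

lemma prime_colon_mult:
  assumes N: "submodule N R M" and x: "x \<in> carrier M" and P: "primeideal (colon N x) R"
    and b: "b \<in> carrier R" "b \<notin> colon N x"
  shows "colon N (b \<odot>\<^bsub>M\<^esub> x) = colon N x"
proof (rule Set.set_eqI)
  fix a show "a \<in> colon N (b \<odot>\<^bsub>M\<^esub> x) \<longleftrightarrow> a \<in> colon N x"
  proof (cases "a \<in> carrier R")
    case True
    have "a \<in> colon N (b \<odot>\<^bsub>M\<^esub> x) \<longleftrightarrow> a \<otimes> b \<in> colon N x" using colon_mult[OF True b(1) x] .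
    also have "\<dots> \<longleftrightarrow> a \<in> colon N x"
    proof
      assume "a \<otimes> b \<in> colon N x"
      then show "a \<in> colon N x" using primeideal.I_prime[OF P True b(1)] b(2) by auto
    next
      assume "a \<in> colon N x"
      then show "a \<otimes> b \<in> colon N x"
        using ideal.I_r_closed[OF primeideal.axioms(1)[OF P]] b(1) by auto
    qed
    finally show ?thesis .
  next
    case False then show ?thesis using colon_sub by auto
  qed
qed

lemma exists_ass:
  assumes N: "submodule N R M" and x: "x \<in> carrier M" "x \<notin> N"
  shows "\<exists>c\<in>carrier R. primeideal (colon N (c \<odot>\<^bsub>M\<^esub> x)) R"
proof -
  define S where "S = {colon N (c \<odot>\<^bsub>M\<^esub> x) | c. c \<in> carrier R \<and> c \<odot>\<^bsub>M\<^esub> x \<notin> N}"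
  have "\<one> \<odot>\<^bsub>M\<^esub> x \<notin> N" using x by simp
  then have "S \<noteq> {}" unfolding S_def by blast
  moreover have "\<And>I. I \<in> S \<Longrightarrow> ideal I R" unfolding S_def using colon_ideal[OF N] x by auto
  ultimately obtain I where I: "I \<in> S" "\<forall>J\<in>S. I \<subseteq> J \<longrightarrow> J = I" using maxel by blast
  then obtain c where c: "c \<in> carrier R" "c \<odot>\<^bsub>M\<^esub> x \<notin> N" "I = colon N (c \<odot>\<^bsub>M\<^esub> x)" unfolding S_def by blast
  have cx: "c \<odot>\<^bsub>M\<^esub> x \<in> carrier M" using c x by auto
  have "primeideal I R"
  proof (rule primeidealI)
    show "ideal I R" using c(3) colon_ideal[OF N cx] by simp
    show "cring R" by (rule R_cring)
    have "\<one> \<notin> I" using c unfolding colon_def using cx by simp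
    then show "carrier R \<noteq> I" by auto
  next
    fix a b assume ab: "a \<in> carrier R" "b \<in> carrier R" "a \<otimes> b \<in> I"
    show "a \<in> I \<or> b \<in> I"
    proof (cases "a \<in> I")
      case True then show ?thesis by simp
    next
      case False
      then have anot: "a \<odot>\<^bsub>M\<^esub> (c \<odot>\<^bsub>M\<^esub> x) \<notin> N" using c(3) ab(1) unfolding colon_def by auto
      have e: "a \<odot>\<^bsub>M\<^esub> (c \<odot>\<^bsub>M\<^esub> x) = (a \<otimes> c) \<odot>\<^bsub>M\<^esub> x" using ab c x by (simp add: smult_assoc1)
      have ac: "a \<otimes> c \<in> carrier R" using ab c by auto
      have "colon N ((a \<otimes> c) \<odot>\<^bsub>M\<^esub> x) \<in> S" unfolding S_def using ac anot e by auto
      moreover have "I \<subseteq> colon N ((a \<otimes> c) \<odot>\<^bsub>M\<^esub> x)"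
        using colon_mono_mult[OF N cx ab(1)] c(3) e by simp
      ultimately have "colon N ((a \<otimes> c) \<odot>\<^bsub>M\<^esub> x) = I" using I(2) by blast
      moreover have "b \<in> colon N ((a \<otimes> c) \<odot>\<^bsub>M\<^esub> x)"
      proof -
        have "b \<otimes> a \<in> colon N (c \<odot>\<^bsub>M\<^esub> x)" using ab c(3) m_comm by auto
        then show ?thesis using colon_mult[OF ab(2) ab(1) cx] e by simp
      qed
      ultimately have "b \<in> I" by simp
      then show ?thesis by simp
    qed
  qed
  then show ?thesis using c by blast
qed

end


context LG begin

lemma colon_split:
  assumes N: "submodule N R M" and N': "submodule N' R M" and NN: "N \<subseteq> N'"
    and x: "x \<in> carrier M" and P: "primeideal (colon N x) R"
  shows "colon N' x = colon N x \<or> (\<exists>b\<in>carrier R. b \<odot>\<^bsub>M\<^esub> x \<in> N' \<and> b \<odot>\<^bsub>M\<^esub> x \<notin> N \<and> colon N (b \<odot>\<^bsub>M\<^esub> x) = colon N x)"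
proof (cases "\<exists>b\<in>carrier R. b \<odot>\<^bsub>M\<^esub> x \<in> N' \<and> b \<odot>\<^bsub>M\<^esub> x \<notin> N")
  case True
  then obtain b where b: "b \<in> carrier R" "b \<odot>\<^bsub>M\<^esub> x \<in> N'" "b \<odot>\<^bsub>M\<^esub> x \<notin> N" by blast
  then have "b \<notin> colon N x" unfolding colon_def by auto
  then have "colon N (b \<odot>\<^bsub>M\<^esub> x) = colon N x" using prime_colon_mult[OF N x P b(1)] by simp
  then show ?thesis using b by blast
next
  case False
  have "colon N' x = colon N x" unfolding colon_def using False NN by blast
  then show ?thesis by simp
qed

definition span1 :: "'b set \<Rightarrow> 'b \<Rightarrow> 'b set" where
  "span1 N z = {n \<oplus>\<^bsub>M\<^esub> b \<odot>\<^bsub>M\<^esub> z | n b. n \<in> N \<and> b \<in> carrier R}"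

lemma span1_submodule:
  assumes N: "submodule N R M" and z: "z \<in> carrier M"
  shows "submodule (span1 N z) R M"
proof (rule submoduleI')
  note Nc = sub_props(1)[OF N]
  show "span1 N z \<subseteq> carrier M" unfolding span1_def using Nc z by auto
  have "\<zero>\<^bsub>M\<^esub> \<oplus>\<^bsub>M\<^esub> \<zero> \<odot>\<^bsub>M\<^esub> z = \<zero>\<^bsub>M\<^esub>" using z by simp
  then show "\<zero>\<^bsub>M\<^esub> \<in> span1 N z" unfolding span1_def using sub_props(2)[OF N] by force
next
  note Nc = sub_props(1)[OF N]
  fix x y assume "x \<in> span1 N z" "y \<in> span1 N z"
  then obtain n b n' b' where h: "n \<in> N" "b \<in> carrier R" "x = n \<oplus>\<^bsub>M\<^esub> b \<odot>\<^bsub>M\<^esub> z"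
    "n' \<in> N" "b' \<in> carrier R" "y = n' \<oplus>\<^bsub>M\<^esub> b' \<odot>\<^bsub>M\<^esub> z" unfolding span1_def by blast
  have c: "n \<in> carrier M" "n' \<in> carrier M" using h Nc by auto
  have "x \<oplus>\<^bsub>M\<^esub> y = (n \<oplus>\<^bsub>M\<^esub> n') \<oplus>\<^bsub>M\<^esub> (b \<oplus> b') \<odot>\<^bsub>M\<^esub> z"
    using h c z by (simp add: smult_l_distr M.a_ac)
  moreover have "n \<oplus>\<^bsub>M\<^esub> n' \<in> N" using sub_props(3)[OF N h(1) h(4)] .
  moreover have "b \<oplus> b' \<in> carrier R" using h by simp
  ultimately show "x \<oplus>\<^bsub>M\<^esub> y \<in> span1 N z" unfolding span1_def by blast
next
  note Nc = sub_props(1)[OF N]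
  fix a x assume a: "a \<in> carrier R" and "x \<in> span1 N z"
  then obtain n b where h: "n \<in> N" "b \<in> carrier R" "x = n \<oplus>\<^bsub>M\<^esub> b \<odot>\<^bsub>M\<^esub> z" unfolding span1_def by blast
  have c: "n \<in> carrier M" using h Nc by auto
  have "a \<odot>\<^bsub>M\<^esub> x = a \<odot>\<^bsub>M\<^esub> n \<oplus>\<^bsub>M\<^esub> (a \<otimes> b) \<odot>\<^bsub>M\<^esub> z"
    using h c z a by (simp add: smult_r_distr smult_assoc1)
  moreover have "a \<odot>\<^bsub>M\<^esub> n \<in> N" using sub_props(4)[OF N a h(1)] .
  moreover have "a \<otimes> b \<in> carrier R" using h a by simp
  ultimately show "a \<odot>\<^bsub>M\<^esub> x \<in> span1 N z" unfolding span1_def by blast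
qed

lemma span1_sup: assumes N: "submodule N R M" and z: "z \<in> carrier M"
  shows "N \<subseteq> span1 N z" "z \<in> span1 N z"
proof -
  show "N \<subseteq> span1 N z"
  proof
    fix n assume n: "n \<in> N"
    then have "n = n \<oplus>\<^bsub>M\<^esub> \<zero> \<odot>\<^bsub>M\<^esub> z" using z sub_props(1)[OF N] by auto
    then show "n \<in> span1 N z" unfolding span1_def using n by blast
  qed
  have "z = \<zero>\<^bsub>M\<^esub> \<oplus>\<^bsub>M\<^esub> \<one> \<odot>\<^bsub>M\<^esub> z" using z by simp
  then show "z \<in> span1 N z" unfolding span1_def using sub_props(2)[OF N] by blast
qed

lemma colon_add:
  assumes N: "submodule N R M" and n: "n \<in> N" and w: "w \<in> carrier M"
  shows "colon N (n \<oplus>\<^bsub>M\<^esub> w) = colon N w"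
proof (rule Set.set_eqI)
  have nc: "n \<in> carrier M" using n sub_props(1)[OF N] by auto
  fix a show "a \<in> colon N (n \<oplus>\<^bsub>M\<^esub> w) \<longleftrightarrow> a \<in> colon N w"
  proof (cases "a \<in> carrier R")
    case True
    have an: "a \<odot>\<^bsub>M\<^esub> n \<in> N" using sub_props(4)[OF N True n] .
    have e: "a \<odot>\<^bsub>M\<^esub> (n \<oplus>\<^bsub>M\<^esub> w) = a \<odot>\<^bsub>M\<^esub> n \<oplus>\<^bsub>M\<^esub> a \<odot>\<^bsub>M\<^esub> w" using True nc w by (simp add: smult_r_distr)
    have "a \<odot>\<^bsub>M\<^esub> n \<oplus>\<^bsub>M\<^esub> a \<odot>\<^bsub>M\<^esub> w \<in> N \<longleftrightarrow> a \<odot>\<^bsub>M\<^esub> w \<in> N"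
    proof
      assume h: "a \<odot>\<^bsub>M\<^esub> n \<oplus>\<^bsub>M\<^esub> a \<odot>\<^bsub>M\<^esub> w \<in> N"
      have "(\<ominus> \<one>) \<odot>\<^bsub>M\<^esub> (a \<odot>\<^bsub>M\<^esub> n) \<in> N" using sub_props(4)[OF N _ an] by simp
      then have "(\<ominus> \<one>) \<odot>\<^bsub>M\<^esub> (a \<odot>\<^bsub>M\<^esub> n) \<oplus>\<^bsub>M\<^esub> (a \<odot>\<^bsub>M\<^esub> n \<oplus>\<^bsub>M\<^esub> a \<odot>\<^bsub>M\<^esub> w) \<in> N"
        using sub_props(3)[OF N _ h] by simp
      moreover have "(\<ominus> \<one>) \<odot>\<^bsub>M\<^esub> (a \<odot>\<^bsub>M\<^esub> n) \<oplus>\<^bsub>M\<^esub> (a \<odot>\<^bsub>M\<^esub> n \<oplus>\<^bsub>M\<^esub> a \<odot>\<^bsub>M\<^esub> w) = a \<odot>\<^bsub>M\<^esub> w"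
        using True nc w by (simp add: smult_l_minus M.a_assoc[symmetric] M.l_neg)
      ultimately show "a \<odot>\<^bsub>M\<^esub> w \<in> N" by simp
    next
      assume "a \<odot>\<^bsub>M\<^esub> w \<in> N"
      then show "a \<odot>\<^bsub>M\<^esub> n \<oplus>\<^bsub>M\<^esub> a \<odot>\<^bsub>M\<^esub> w \<in> N" using sub_props(3)[OF N an] by simp
    qed
    then show ?thesis unfolding colon_def using e True by simp
  next
    case False then show ?thesis using colon_sub by auto
  qed
qed

lemma colon_carrier_not_prime:
  assumes "x \<in> N" "submodule N R M"
  shows "\<not> primeideal (colon N x) R"
proof
  assume P: "primeideal (colon N x) R"
  have "x \<in> carrier M" using assms sub_props(1) by auto
  then have "\<one> \<in> colon N x" using assms(1) unfolding colon_def by simp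
  then show False using prime_one[OF P] by simp
qed

definition fam :: "'b set \<Rightarrow> 'b \<Rightarrow> 'a set set" where
  "fam N y = {q. primeideal q R \<and> (\<exists>a\<in>carrier R. q = colon N (a \<odot>\<^bsub>M\<^esub> y))}"

lemma fam_finite:
  assumes N: "submodule N R M" and y: "y \<in> carrier M"
  shows "finite (fam N y)"
proof (rule ccontr)
  assume inf: "\<not> finite (fam N y)"
  define BAD where "BAD = {colon N y | N y. submodule N R M \<and> y \<in> carrier M \<and> \<not> finite (fam N y)}"
  have "BAD \<noteq> {}" unfolding BAD_def using N y inf by blast
  moreover have "\<And>I. I \<in> BAD \<Longrightarrow> ideal I R" unfolding BAD_def using colon_ideal by blast
  ultimately obtain I0 where I0: "I0 \<in> BAD" "\<forall>J\<in>BAD. I0 \<subseteq> J \<longrightarrow> J = I0" using maxel by blast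
  then obtain N0 y0 where h: "submodule N0 R M" "y0 \<in> carrier M" "\<not> finite (fam N0 y0)" "I0 = colon N0 y0"
    unfolding BAD_def by blast
  show False
  proof (cases "y0 \<in> N0")
    case True
    have "fam N0 y0 = {}"
    proof -
      have "\<not> primeideal (colon N0 (a \<odot>\<^bsub>M\<^esub> y0)) R" if "a \<in> carrier R" for a
        using colon_carrier_not_prime[OF sub_props(4)[OF h(1) that True] h(1)] .
      then show ?thesis unfolding fam_def by blast
    qed
    then show False using h(3) by simp
  next
    case False
    obtain c where c: "c \<in> carrier R" "primeideal (colon N0 (c \<odot>\<^bsub>M\<^esub> y0)) R"
      using exists_ass[OF h(1) h(2) False] by blast
    define z where "z = c \<odot>\<^bsub>M\<^esub> y0"
    define q0 where "q0 = colon N0 z"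
    have zc: "z \<in> carrier M" unfolding z_def using c h by auto
    have q0P: "primeideal q0 R" using c(2) unfolding q0_def z_def .
    have zN: "z \<notin> N0" using colon_carrier_not_prime[of z N0] h(1) q0P unfolding q0_def by blast
    define N' where "N' = span1 N0 z"
    have N'S: "submodule N' R M" unfolding N'_def by (rule span1_submodule[OF h(1) zc])
    have NN: "N0 \<subseteq> N'" "z \<in> N'" unfolding N'_def using span1_sup[OF h(1) zc] by auto
    have sup: "colon N0 y0 \<subseteq> colon N' y0" using NN unfolding colon_def by auto
    have "c \<in> colon N' y0" using NN c unfolding colon_def z_def by auto
    moreover have "c \<notin> colon N0 y0" using zN unfolding colon_def z_def by auto
    ultimately have "colon N' y0 \<noteq> I0" using h(4) by auto
    then have "colon N' y0 \<notin> BAD" using I0(2) sup h(4) by auto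
    then have finN': "finite (fam N' y0)" unfolding BAD_def using N'S h(2) by blast
    have "fam N0 y0 \<subseteq> insert q0 (fam N' y0)"
    proof
      fix q assume "q \<in> fam N0 y0"
      then obtain a where a: "primeideal q R" "a \<in> carrier R" "q = colon N0 (a \<odot>\<^bsub>M\<^esub> y0)"
        unfolding fam_def by blast
      have ay: "a \<odot>\<^bsub>M\<^esub> y0 \<in> carrier M" using a h by auto
      have Pq: "primeideal (colon N0 (a \<odot>\<^bsub>M\<^esub> y0)) R" using a by simp
      from colon_split[OF h(1) N'S NN(1) ay Pq]
      show "q \<in> insert q0 (fam N' y0)"
      proof
        assume "colon N' (a \<odot>\<^bsub>M\<^esub> y0) = colon N0 (a \<odot>\<^bsub>M\<^esub> y0)"
        then show ?thesis using a unfolding fam_def by auto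
      next
        assume "\<exists>b\<in>carrier R. b \<odot>\<^bsub>M\<^esub> (a \<odot>\<^bsub>M\<^esub> y0) \<in> N' \<and> b \<odot>\<^bsub>M\<^esub> (a \<odot>\<^bsub>M\<^esub> y0) \<notin> N0 \<and>
           colon N0 (b \<odot>\<^bsub>M\<^esub> (a \<odot>\<^bsub>M\<^esub> y0)) = colon N0 (a \<odot>\<^bsub>M\<^esub> y0)"
        then obtain b where b: "b \<in> carrier R" "b \<odot>\<^bsub>M\<^esub> (a \<odot>\<^bsub>M\<^esub> y0) \<in> N'"
          "b \<odot>\<^bsub>M\<^esub> (a \<odot>\<^bsub>M\<^esub> y0) \<notin> N0" "colon N0 (b \<odot>\<^bsub>M\<^esub> (a \<odot>\<^bsub>M\<^esub> y0)) = q" using a(3) by blast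
        then obtain n d where nd: "n \<in> N0" "d \<in> carrier R" "b \<odot>\<^bsub>M\<^esub> (a \<odot>\<^bsub>M\<^esub> y0) = n \<oplus>\<^bsub>M\<^esub> d \<odot>\<^bsub>M\<^esub> z"
          unfolding N'_def span1_def by blast
        have dz: "d \<odot>\<^bsub>M\<^esub> z \<in> carrier M" using nd zc by auto
        have e1: "q = colon N0 (d \<odot>\<^bsub>M\<^esub> z)" using b(4) nd(3) colon_add[OF h(1) nd(1) dz] by simp
        have "d \<odot>\<^bsub>M\<^esub> z \<notin> N0"
        proof
          assume "d \<odot>\<^bsub>M\<^esub> z \<in> N0"
          then have "n \<oplus>\<^bsub>M\<^esub> d \<odot>\<^bsub>M\<^esub> z \<in> N0" using sub_props(3)[OF h(1) nd(1)] by simp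
          then show False using b(3) nd(3) by simp
        qed
        then have "d \<notin> q0" unfolding q0_def colon_def by auto
        then have "colon N0 (d \<odot>\<^bsub>M\<^esub> z) = q0" using prime_colon_mult[OF h(1) zc _ nd(2)] q0P unfolding q0_def by simp
        then show ?thesis using e1 by simp
      qed
    qed
    then have "finite (fam N0 y0)" using finN' finite_subset by blast
    then show False using h(3) by simp
  qed
qed

lemma carrier_submodule: "submodule (carrier M) R M"
  by (rule submoduleI') auto

lemma ass_carrier: "ass_quot R M (carrier M) = {}"
proof -
  { fix q assume "q \<in> ass_quot R M (carrier M)"
    then obtain x where x: "primeideal q R" "x \<in> carrier M" "q = colon (carrier M) x" unfolding ass_quot_iff by blast
    then have False using colon_carrier_not_prime[OF x(2) carrier_submodule] by simp }
  then show ?thesis by blast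
qed

end


context LG begin

lemma fin_ass_aux:
  "finite T \<Longrightarrow> T \<subseteq> carrier M \<Longrightarrow> submodule N R M \<Longrightarrow>
   (\<forall>H. submodule H R M \<and> N \<union> T \<subseteq> H \<longrightarrow> H = carrier M) \<Longrightarrow> finite (ass_quot R M N)"
proof (induction T arbitrary: N rule: finite_induct)
  case empty
  then have "N = carrier M" by blast
  then show ?case using ass_carrier by simp
next
  case (insert y T)
  have y: "y \<in> carrier M" using insert by auto
  define N' where "N' = span1 N y"
  have N'S: "submodule N' R M" unfolding N'_def by (rule span1_submodule[OF insert(5) y])
  have NN: "N \<subseteq> N'" "y \<in> N'" unfolding N'_def using span1_sup[OF insert(5) y] by auto
  have "\<forall>H. submodule H R M \<and> N' \<union> T \<subseteq> H \<longrightarrow> H = carrier M"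
    using insert(6) NN by blast
  then have fin: "finite (ass_quot R M N')" using insert(3)[OF _ N'S] insert(4) by blast
  have "ass_quot R M N \<subseteq> ass_quot R M N' \<union> fam N y"
  proof
    fix q assume "q \<in> ass_quot R M N"
    then obtain x where x: "primeideal q R" "x \<in> carrier M" "q = colon N x" unfolding ass_quot_iff by blast
    have Pq: "primeideal (colon N x) R" using x by simp
    from colon_split[OF insert(5) N'S NN(1) x(2) Pq]
    show "q \<in> ass_quot R M N' \<union> fam N y"
    proof
      assume "colon N' x = colon N x"
      then have "q = colon N' x" using x(3) by simp
      then have "q \<in> ass_quot R M N'" using x(1,2) unfolding ass_quot_iff by blast
      then show ?thesis by blast
    next
      assume "\<exists>b\<in>carrier R. b \<odot>\<^bsub>M\<^esub> x \<in> N' \<and> b \<odot>\<^bsub>M\<^esub> x \<notin> N \<and> colon N (b \<odot>\<^bsub>M\<^esub> x) = colon N x"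
      then obtain b where b: "b \<in> carrier R" "b \<odot>\<^bsub>M\<^esub> x \<in> N'" "colon N (b \<odot>\<^bsub>M\<^esub> x) = q" using x(3) by blast
      then obtain n d where nd: "n \<in> N" "d \<in> carrier R" "b \<odot>\<^bsub>M\<^esub> x = n \<oplus>\<^bsub>M\<^esub> d \<odot>\<^bsub>M\<^esub> y"
        unfolding N'_def span1_def by blast
      have dy: "d \<odot>\<^bsub>M\<^esub> y \<in> carrier M" using nd y by auto
      have "q = colon N (d \<odot>\<^bsub>M\<^esub> y)" using b(3) nd(3) colon_add[OF insert(5) nd(1) dy] by simp
      then show ?thesis using x(1) nd(2) unfolding fam_def by blast
    qed
  qed
  moreover have "finite (fam N y)" by (rule fam_finite[OF insert(5) y])
  ultimately show ?case using fin finite_subset by blast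
qed

lemma finite_ass:
  assumes fg: "fin_gen_module R M" and F: "submodule F R M"
  shows "finite (ass_quot R M F)"
proof -
  obtain S where S: "finite S" "S \<subseteq> carrier M" "\<forall>H. submodule H R M \<and> S \<subseteq> H \<longrightarrow> H = carrier M"
    using fg unfolding fin_gen_module_def by blast
  show ?thesis by (rule fin_ass_aux[OF S(1) S(2) F]) (use S(3) in blast)
qed

lemma sat_submodule:
  assumes N: "submodule N R M" and P: "primeideal p R"
  shows "submodule (sat p N) R M"
proof (rule submoduleI')
  show "sat p N \<subseteq> carrier M" unfolding sat_def by auto
  show "\<zero>\<^bsub>M\<^esub> \<in> sat p N" using sub_sat[OF N P] sub_props(2)[OF N] by auto
next
  fix x y assume "x \<in> sat p N" "y \<in> sat p N"
  then obtain s t where h: "x \<in> carrier M" "s \<in> carrier R - p" "s \<odot>\<^bsub>M\<^esub> x \<in> N"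
    "y \<in> carrier M" "t \<in> carrier R - p" "t \<odot>\<^bsub>M\<^esub> y \<in> N" unfolding sat_def by blast
  have "(s \<otimes> t) \<odot>\<^bsub>M\<^esub> (x \<oplus>\<^bsub>M\<^esub> y) = t \<odot>\<^bsub>M\<^esub> (s \<odot>\<^bsub>M\<^esub> x) \<oplus>\<^bsub>M\<^esub> s \<odot>\<^bsub>M\<^esub> (t \<odot>\<^bsub>M\<^esub> y)"
    using h by (simp add: smult_r_distr smult_assoc1[symmetric] m_comm)
  moreover have "t \<odot>\<^bsub>M\<^esub> (s \<odot>\<^bsub>M\<^esub> x) \<oplus>\<^bsub>M\<^esub> s \<odot>\<^bsub>M\<^esub> (t \<odot>\<^bsub>M\<^esub> y) \<in> N"
    using sub_props(3)[OF N sub_props(4)[OF N _ h(3)] sub_props(4)[OF N _ h(6)]] h by auto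
  moreover have "s \<otimes> t \<in> carrier R - p" using prime_mult[OF P h(2) h(5)] .
  moreover have "x \<oplus>\<^bsub>M\<^esub> y \<in> carrier M" using h by simp
  ultimately have "(s \<otimes> t) \<odot>\<^bsub>M\<^esub> (x \<oplus>\<^bsub>M\<^esub> y) \<in> N" "s \<otimes> t \<in> carrier R - p" "x \<oplus>\<^bsub>M\<^esub> y \<in> carrier M" by auto
  then show "x \<oplus>\<^bsub>M\<^esub> y \<in> sat p N" unfolding sat_def by blast
next
  fix a x assume a: "a \<in> carrier R" and "x \<in> sat p N"
  then obtain s where h: "x \<in> carrier M" "s \<in> carrier R - p" "s \<odot>\<^bsub>M\<^esub> x \<in> N" unfolding sat_def by blast
  have "s \<odot>\<^bsub>M\<^esub> (a \<odot>\<^bsub>M\<^esub> x) = a \<odot>\<^bsub>M\<^esub> (s \<odot>\<^bsub>M\<^esub> x)" using h a by (simp add: smult_assoc1[symmetric] m_comm)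
  moreover have "a \<odot>\<^bsub>M\<^esub> (s \<odot>\<^bsub>M\<^esub> x) \<in> N" using sub_props(4)[OF N a h(3)] .
  moreover have "a \<odot>\<^bsub>M\<^esub> x \<in> carrier M" using a h by simp
  ultimately have "s \<odot>\<^bsub>M\<^esub> (a \<odot>\<^bsub>M\<^esub> x) \<in> N" "a \<odot>\<^bsub>M\<^esub> x \<in> carrier M" by auto
  then show "a \<odot>\<^bsub>M\<^esub> x \<in> sat p N" unfolding sat_def using h(2) by blast
qed

lemma ass_sat_sub:
  assumes N: "submodule N R M" and P: "primeideal p R" and y: "y \<in> carrier M"
    and Q: "primeideal (colon (sat p N) y) R"
  shows "colon (sat p N) y \<subseteq> p"
proof
  fix a assume a: "a \<in> colon (sat p N) y"
  show "a \<in> p"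
  proof (rule ccontr)
    assume ap: "a \<notin> p"
    have ac: "a \<in> carrier R" using a colon_sub by auto
    obtain s where s: "s \<in> carrier R - p" "s \<odot>\<^bsub>M\<^esub> (a \<odot>\<^bsub>M\<^esub> y) \<in> N" using a unfolding colon_def sat_def by auto
    have "(s \<otimes> a) \<odot>\<^bsub>M\<^esub> y \<in> N" using s ac y by (simp add: smult_assoc1)
    moreover have "s \<otimes> a \<in> carrier R - p" using prime_mult[OF P s(1)] ap ac by auto
    ultimately have "y \<in> sat p N" unfolding sat_def using y by blast
    then have "\<one> \<in> colon (sat p N) y" unfolding colon_def using y by simp
    then show False using prime_one[OF Q] by simp
  qed
qed

lemma colon_sat_prime:
  assumes N: "submodule N R M" and P: "primeideal p R" and x: "x \<in> carrier M" and px: "p = colon N x"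
  shows "colon (sat p N) x = p"
proof (rule Set.set_eqI)
  fix a show "a \<in> colon (sat p N) x \<longleftrightarrow> a \<in> p"
  proof
    assume "a \<in> colon (sat p N) x"
    then obtain s where s: "a \<in> carrier R" "s \<in> carrier R - p" "s \<odot>\<^bsub>M\<^esub> (a \<odot>\<^bsub>M\<^esub> x) \<in> N"
      unfolding colon_def sat_def by auto
    then have "s \<otimes> a \<in> colon N x" unfolding colon_def using x by (simp add: smult_assoc1)
    then have "s \<otimes> a \<in> p" using px by simp
    then show "a \<in> p" using primeideal.I_prime[OF P, of s a] s by auto
  next
    assume "a \<in> p"
    then have "a \<in> colon N x" using px by simp
    then show "a \<in> colon (sat p N) x" using sub_sat[OF N P] unfolding colon_def by auto
  qed
qed

lemma fg_pull:
  assumes N: "submodule N R M" and P: "primeideal p R" and y: "y \<in> carrier M"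
  shows "\<exists>s\<in>carrier R - p. colon (sat p N) y = colon N (s \<odot>\<^bsub>M\<^esub> y)"
proof -
  have SN: "submodule (sat p N) R M" by (rule sat_submodule[OF N P])
  have I: "ideal (colon (sat p N) y) R" by (rule colon_ideal[OF SN y])
  obtain A where A: "A \<subseteq> carrier R" "finite A" "colon (sat p N) y = Idl A"
    using finetely_gen[OF I] by blast
  have Aq: "A \<subseteq> colon (sat p N) y" using A genideal_self[OF A(1)] by simp
  have "\<forall>A0. finite A0 \<longrightarrow> A0 \<subseteq> colon (sat p N) y \<longrightarrow> (\<exists>s\<in>carrier R - p. A0 \<subseteq> colon N (s \<odot>\<^bsub>M\<^esub> y))"
  proof (intro allI impI)
    fix A0 :: "'a set" assume "finite A0" "A0 \<subseteq> colon (sat p N) y"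
    then show "\<exists>s\<in>carrier R - p. A0 \<subseteq> colon N (s \<odot>\<^bsub>M\<^esub> y)"
    proof (induction A0 rule: finite_induct)
      case empty then show ?case using prime_S1[OF P] by blast
    next
      case (insert a A0)
      then obtain s where s: "s \<in> carrier R - p" "A0 \<subseteq> colon N (s \<odot>\<^bsub>M\<^esub> y)" by blast
      have "a \<in> colon (sat p N) y" using insert by auto
      then obtain t where t: "a \<in> carrier R" "t \<in> carrier R - p" "t \<odot>\<^bsub>M\<^esub> (a \<odot>\<^bsub>M\<^esub> y) \<in> N"
        unfolding colon_def sat_def by auto
      have sc: "s \<in> carrier R" "t \<in> carrier R" using s t by auto
      have sy: "s \<odot>\<^bsub>M\<^esub> y \<in> carrier M" using sc y by simp
      have e: "(t \<otimes> s) \<odot>\<^bsub>M\<^esub> y = t \<odot>\<^bsub>M\<^esub> (s \<odot>\<^bsub>M\<^esub> y)" using sc y by (simp add: smult_assoc1)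
      have "A0 \<subseteq> colon N ((t \<otimes> s) \<odot>\<^bsub>M\<^esub> y)" using s(2) colon_mono_mult[OF N sy sc(2)] e by auto
      moreover have "a \<in> colon N ((t \<otimes> s) \<odot>\<^bsub>M\<^esub> y)"
      proof -
        have "s \<odot>\<^bsub>M\<^esub> (t \<odot>\<^bsub>M\<^esub> (a \<odot>\<^bsub>M\<^esub> y)) \<in> N" using sub_props(4)[OF N sc(1) t(3)] .
        moreover have "s \<odot>\<^bsub>M\<^esub> (t \<odot>\<^bsub>M\<^esub> (a \<odot>\<^bsub>M\<^esub> y)) = a \<odot>\<^bsub>M\<^esub> ((t \<otimes> s) \<odot>\<^bsub>M\<^esub> y)"
          using sc t(1) y by (simp add: smult_assoc1[symmetric] m_ac)
        ultimately show ?thesis unfolding colon_def using t(1) by simp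
      qed
      moreover have "t \<otimes> s \<in> carrier R - p" using prime_mult[OF P t(2) s(1)] .
      ultimately show ?case by blast
    qed
  qed
  then obtain s where s: "s \<in> carrier R - p" "A \<subseteq> colon N (s \<odot>\<^bsub>M\<^esub> y)" using A(2) Aq by blast
  have sy: "s \<odot>\<^bsub>M\<^esub> y \<in> carrier M" using s y by simp
  have "colon (sat p N) y \<subseteq> colon N (s \<odot>\<^bsub>M\<^esub> y)"
    using A(3) genideal_minimal[OF colon_ideal[OF N sy] s(2)] by simp
  moreover have "colon N (s \<odot>\<^bsub>M\<^esub> y) \<subseteq> colon (sat p N) y"
  proof
    fix b assume "b \<in> colon N (s \<odot>\<^bsub>M\<^esub> y)"
    then have b: "b \<in> carrier R" "b \<odot>\<^bsub>M\<^esub> (s \<odot>\<^bsub>M\<^esub> y) \<in> N" unfolding colon_def by auto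
    have "s \<odot>\<^bsub>M\<^esub> (b \<odot>\<^bsub>M\<^esub> y) = b \<odot>\<^bsub>M\<^esub> (s \<odot>\<^bsub>M\<^esub> y)" using b s y by (simp add: smult_assoc1[symmetric] m_comm)
    then have "s \<odot>\<^bsub>M\<^esub> (b \<odot>\<^bsub>M\<^esub> y) \<in> N" using b(2) by simp
    moreover have "b \<odot>\<^bsub>M\<^esub> y \<in> carrier M" using b y by simp
    ultimately have "b \<odot>\<^bsub>M\<^esub> y \<in> sat p N" unfolding sat_def using s(1) by blast
    then show "b \<in> colon (sat p N) y" unfolding colon_def using b by simp
  qed
  ultimately show ?thesis using s by blast
qed

lemma ass_sat_iff:
  assumes N: "submodule N R M" and P: "primeideal p R"
  shows "p \<in> ass_quot R M N \<longleftrightarrow> p \<in> ass_quot R M (sat p N)"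
proof
  assume "p \<in> ass_quot R M N"
  then obtain x where x: "x \<in> carrier M" "p = colon N x" unfolding ass_quot_iff by blast
  then have "colon (sat p N) x = p" using colon_sat_prime[OF N P] by blast
  then show "p \<in> ass_quot R M (sat p N)" using P x unfolding ass_quot_iff by auto
next
  assume "p \<in> ass_quot R M (sat p N)"
  then obtain y where y: "y \<in> carrier M" "p = colon (sat p N) y" unfolding ass_quot_iff by blast
  obtain s where s: "s \<in> carrier R - p" "colon (sat p N) y = colon N (s \<odot>\<^bsub>M\<^esub> y)" using fg_pull[OF N P y(1)] by blast
  have "s \<odot>\<^bsub>M\<^esub> y \<in> carrier M" using s y by simp
  then show "p \<in> ass_quot R M N" using P y(2) s(2) unfolding ass_quot_iff by auto
qed

end


context LG begin

lemma prime_inter: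
  assumes "finite A"
  shows "(\<forall>i\<in>A. ideal (K i) R) \<Longrightarrow> primeideal r R \<Longrightarrow> r = carrier R \<inter> (\<Inter>i\<in>A. K i) \<Longrightarrow> \<exists>i\<in>A. r = K i"
  using assms
proof (induction A arbitrary: r rule: finite_induct)
  case empty
  then have "\<one> \<in> r" by simp
  then show ?case using prime_one[OF empty(2)] by simp
next
  case (insert i A)
  define W0 where "W0 = carrier R \<inter> (\<Inter>j\<in>A. K j)"
  have Ki: "ideal (K i) R" using insert(4) by auto
  have KA: "\<forall>j\<in>A. ideal (K j) R" using insert(4) by auto
  have Kic: "K i \<subseteq> carrier R" using Ki ideal.axioms(1) additive_subgroup.a_subset by blast
  have r: "r = K i \<inter> W0" using insert(6) Kic unfolding W0_def by auto
  show ?case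
  proof (cases "W0 \<subseteq> r")
    case True
    then have "r = W0" using r by auto
    then show ?thesis using insert(3)[OF KA insert(5)] unfolding W0_def by auto
  next
    case False
    then obtain x where x: "x \<in> W0" "x \<notin> r" by auto
    show ?thesis
    proof (cases "K i \<subseteq> r")
      case True
      then have "r = K i" using r by auto
      then show ?thesis by auto
    next
      case False
      then obtain k where k: "k \<in> K i" "k \<notin> r" by auto
      have kc: "k \<in> carrier R" using k Kic by auto
      have xc: "x \<in> carrier R" using x unfolding W0_def by auto
      have "k \<otimes> x \<in> K i" using ideal.I_r_closed[OF Ki k(1) xc] .
      moreover have "k \<otimes> x \<in> W0"
      proof -
        have "\<forall>j\<in>A. k \<otimes> x \<in> K j"
        proof
          fix j assume j: "j \<in> A"
          then have "x \<in> K j" using x unfolding W0_def by auto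
          then show "k \<otimes> x \<in> K j" using ideal.I_l_closed[of "K j" R x k] KA j kc by auto
        qed
        then show ?thesis unfolding W0_def using kc xc by auto
      qed
      ultimately have "k \<otimes> x \<in> r" using r by auto
      then have "k \<in> r \<or> x \<in> r" using primeideal.I_prime[OF insert(5) kc xc] by simp
      then show ?thesis using k x by auto
    qed
  qed
qed

lemma main:
  assumes fg: "fin_gen_module R M"
    and JS: "\<And>p. primeideal p R \<Longrightarrow> submodule (J p) (loc_ring R p) (loc_module R M p)"
  defines "AA \<equiv> {p. primeideal p R \<and>
      ext_ideal R p p \<in> ass_quot (loc_ring R p) (loc_module R M p) (J p)}"
  shows "((\<exists>F. submodule F R M \<and> (\<forall>p. primeideal p R \<longrightarrow> loc_sub R M p F = J p))
           \<longleftrightarrow> ((\<forall>p q. primeideal p R \<and> primeideal q R \<and> p \<subseteq> q \<longrightarrow> J p = loc_sub_at R M p q (J q))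
                \<and> finite AA))
      \<and> (\<forall>F F'. submodule F R M \<and> (\<forall>p. primeideal p R \<longrightarrow> loc_sub R M p F = J p) \<and>
           submodule F' R M \<and> (\<forall>p. primeideal p R \<longrightarrow> loc_sub R M p F' = J p) \<longrightarrow> F = F')
      \<and> (\<forall>F. submodule F R M \<and> (\<forall>p. primeideal p R \<longrightarrow> loc_sub R M p F = J p) \<longrightarrow>
           ass_quot R M F = AA)"
proof -
  have AA: "AA = {p. primeideal p R \<and> p \<in> ass_quot R M (G J p)}"
  proof (rule Set.set_eqI)
    fix p show "p \<in> AA \<longleftrightarrow> p \<in> {p. primeideal p R \<and> p \<in> ass_quot R M (G J p)}"
    proof (cases "primeideal p R")
      case True then show ?thesis unfolding AA_def using G_ass[of p J, OF True JS[OF True]] by simp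
    qed (simp add: AA_def)
  qed
  have GS: "submodule (G J p) R M" if P: "primeideal p R" for p using G_submodule[of p J, OF P JS[OF P]] .
  have Gsat: "sat p (G J p) = G J p" if P: "primeideal p R" for p using sat_G[of p J, OF P JS[OF P]] .
  have P3: "ass_quot R M F = AA" if F: "submodule F R M" and L: "\<forall>p. primeideal p R \<longrightarrow> loc_sub R M p F = J p" for F
  proof (rule Set.set_eqI)
    fix p
    show "p \<in> ass_quot R M F \<longleftrightarrow> p \<in> AA"
    proof (cases "primeideal p R")
      case True
      have "G J p = sat p F" using sat_F[OF True F] L True by blast
      then have "p \<in> ass_quot R M F \<longleftrightarrow> p \<in> ass_quot R M (G J p)" using ass_sat_iff[OF F True] by simp
      then show ?thesis unfolding AA using True by simp
    next
      case False
      then show ?thesis unfolding AA ass_quot_iff by simp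
    qed
  qed
  have P2: "F \<subseteq> F'" if F: "submodule F R M" "\<forall>p. primeideal p R \<longrightarrow> loc_sub R M p F = J p"
    and F': "submodule F' R M" "\<forall>p. primeideal p R \<longrightarrow> loc_sub R M p F' = J p" for F F'
  proof
    fix x assume xF: "x \<in> F"
    have xc: "x \<in> carrier M" using xF sub_props(1)[OF F(1)] by auto
    show "x \<in> F'"
    proof (rule ccontr)
      assume "x \<notin> F'"
      then obtain c where c: "c \<in> carrier R" "primeideal (colon F' (c \<odot>\<^bsub>M\<^esub> x)) R"
        using exists_ass[OF F'(1) xc] by blast
      define r where "r = colon F' (c \<odot>\<^bsub>M\<^esub> x)"
      have rP: "primeideal r R" using c(2) unfolding r_def .
      have "sat r F = sat r F'" using sat_F[OF rP F(1)] sat_F[OF rP F'(1)] F(2) F'(2) rP by metis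
      moreover have "x \<in> sat r F" using sub_sat[OF F(1) rP] xF by auto
      ultimately obtain s where s: "s \<in> carrier R - r" "s \<odot>\<^bsub>M\<^esub> x \<in> F'" unfolding sat_def by blast
      have "c \<odot>\<^bsub>M\<^esub> (s \<odot>\<^bsub>M\<^esub> x) \<in> F'" using sub_props(4)[OF F'(1) c(1) s(2)] .
      moreover have "c \<odot>\<^bsub>M\<^esub> (s \<odot>\<^bsub>M\<^esub> x) = s \<odot>\<^bsub>M\<^esub> (c \<odot>\<^bsub>M\<^esub> x)" using c s xc
        by (simp add: smult_assoc1[symmetric] m_comm)
      ultimately have "s \<in> r" unfolding r_def colon_def using s by auto
      then show False using s by auto
    qed
  qed
  have P1a: "(\<forall>p q. primeideal p R \<and> primeideal q R \<and> p \<subseteq> q \<longrightarrow> J p = loc_sub_at R M p q (J q)) \<and> finite AA"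
    if F: "submodule F R M" and L: "\<forall>p. primeideal p R \<longrightarrow> loc_sub R M p F = J p" for F
  proof
    show "\<forall>p q. primeideal p R \<and> primeideal q R \<and> p \<subseteq> q \<longrightarrow> J p = loc_sub_at R M p q (J q)"
    proof (intro allI impI, elim conjE)
      fix p q assume pq: "primeideal p R" "primeideal q R" "p \<subseteq> q"
      have "J p = loc_sub R M p F" using L pq by simp
      also have "\<dots> = loc_sub_at R M p q (loc_sub R M q F)" using loc_sub_at_F[OF pq(2) pq(1) pq(3) F] by simp
      also have "\<dots> = loc_sub_at R M p q (J q)" using L pq by simp
      finally show "J p = loc_sub_at R M p q (J q)" .
    qed
    show "finite AA" using P3[OF F L] finite_ass[OF fg F] by simp
  qed
  have P1b: "\<exists>F. submodule F R M \<and> (\<forall>p. primeideal p R \<longrightarrow> loc_sub R M p F = J p)"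
    if C: "\<forall>p q. primeideal p R \<and> primeideal q R \<and> p \<subseteq> q \<longrightarrow> J p = loc_sub_at R M p q (J q)"
    and fin: "finite AA"
  proof -
    have GC: "G J p = sat p (G J q)" if "primeideal p R" "primeideal q R" "p \<subseteq> q" for p q
      using G_consistent[OF that(2) that(1) that(3) JS[OF that(2)] JS[OF that(1)]] C that by blast
    have AAP: "\<And>r. r \<in> AA \<Longrightarrow> primeideal r R" unfolding AA by blast
    define H where "H = {x \<in> carrier M. \<forall>r\<in>AA. x \<in> G J r}"
    have HS: "submodule H R M"
    proof (rule submoduleI')
      show "H \<subseteq> carrier M" unfolding H_def by auto
      show "\<zero>\<^bsub>M\<^esub> \<in> H" unfolding H_def using sub_props(2)[OF GS[OF AAP]] by auto
    next
      fix x y assume "x \<in> H" "y \<in> H"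
      then show "x \<oplus>\<^bsub>M\<^esub> y \<in> H" unfolding H_def using sub_props(3)[OF GS[OF AAP]] by auto
    next
      fix a x assume "a \<in> carrier R" "x \<in> H"
      then show "a \<odot>\<^bsub>M\<^esub> x \<in> H" unfolding H_def using sub_props(4)[OF GS[OF AAP]] by auto
    qed
    have assAA: "r \<in> AA" if q: "primeideal q R" and z: "z \<in> carrier M" and r: "r = colon (G J q) z"
      and rP: "primeideal r R" for q z r
    proof -
      have "colon (sat q (G J q)) z = r" using Gsat[OF q] r by simp
      then have rq: "r \<subseteq> q" using ass_sat_sub[OF GS[OF q] q z] rP by simp
      have "G J r = sat r (G J q)" using GC[OF rP q rq] .
      moreover have "colon (sat r (G J q)) z = r" using colon_sat_prime[OF GS[OF q] rP z r] .
      ultimately have "r = colon (G J r) z" by simp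
      then have "r \<in> ass_quot R M (G J r)" using rP z unfolding ass_quot_iff by blast
      then show ?thesis unfolding AA using rP by blast
    qed
    have HG: "H \<subseteq> G J q" if q: "primeideal q R" for q
    proof
      fix y assume yH: "y \<in> H"
      show "y \<in> G J q"
      proof (rule ccontr)
        assume yn: "y \<notin> G J q"
        have yc: "y \<in> carrier M" using yH unfolding H_def by auto
        obtain c where c: "c \<in> carrier R" "primeideal (colon (G J q) (c \<odot>\<^bsub>M\<^esub> y)) R"
          using exists_ass[OF GS[OF q] yc yn] by blast
        have cy: "c \<odot>\<^bsub>M\<^esub> y \<in> carrier M" using c yc by simp
        have rA: "colon (G J q) (c \<odot>\<^bsub>M\<^esub> y) \<in> AA" using assAA[OF q cy refl c(2)] .
        then have "y \<in> G J (colon (G J q) (c \<odot>\<^bsub>M\<^esub> y))" using yH unfolding H_def by auto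
        then have "c \<odot>\<^bsub>M\<^esub> y \<in> G J (colon (G J q) (c \<odot>\<^bsub>M\<^esub> y))"
          using sub_props(4)[OF GS[OF AAP[OF rA]] c(1)] by auto
        moreover have "G J (colon (G J q) (c \<odot>\<^bsub>M\<^esub> y)) = sat (colon (G J q) (c \<odot>\<^bsub>M\<^esub> y)) (G J q)"
        proof -
          have "colon (sat q (G J q)) (c \<odot>\<^bsub>M\<^esub> y) = colon (G J q) (c \<odot>\<^bsub>M\<^esub> y)" using Gsat[OF q] by simp
          then have "colon (G J q) (c \<odot>\<^bsub>M\<^esub> y) \<subseteq> q" using ass_sat_sub[OF GS[OF q] q cy] c(2) by simp
          then show ?thesis using GC[OF c(2) q] by simp
        qed
        ultimately have "c \<odot>\<^bsub>M\<^esub> y \<in> sat (colon (G J q) (c \<odot>\<^bsub>M\<^esub> y)) (G J q)" by simp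
        then obtain s where s: "s \<in> carrier R" "s \<notin> colon (G J q) (c \<odot>\<^bsub>M\<^esub> y)"
          "s \<odot>\<^bsub>M\<^esub> (c \<odot>\<^bsub>M\<^esub> y) \<in> G J q" unfolding sat_def by blast
        then show False unfolding colon_def by auto
      qed
    qed
    have satH: "sat p H = G J p" if P: "primeideal p R" for p
    proof
      show "sat p H \<subseteq> G J p"
      proof
        fix x assume "x \<in> sat p H"
        then obtain s where s: "x \<in> carrier M" "s \<in> carrier R - p" "s \<odot>\<^bsub>M\<^esub> x \<in> H" unfolding sat_def by blast
        then have "s \<odot>\<^bsub>M\<^esub> x \<in> G J p" using HG[OF P] by auto
        then have "x \<in> sat p (G J p)" unfolding sat_def using s by blast
        then show "x \<in> G J p" using Gsat[OF P] by simp
      qed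
      show "G J p \<subseteq> sat p H"
      proof
        fix x assume xG: "x \<in> G J p"
        have xc: "x \<in> carrier M" using xG G_sub by auto
        show "x \<in> sat p H"
        proof (rule ccontr)
          assume xn: "x \<notin> sat p H"
          have SH: "submodule (sat p H) R M" by (rule sat_submodule[OF HS P])
          obtain c where c: "c \<in> carrier R" "primeideal (colon (sat p H) (c \<odot>\<^bsub>M\<^esub> x)) R"
            using exists_ass[OF SH xc xn] by blast
          define r where "r = colon (sat p H) (c \<odot>\<^bsub>M\<^esub> x)"
          have cx: "c \<odot>\<^bsub>M\<^esub> x \<in> carrier M" using c xc by simp
          have rP: "primeideal r R" using c(2) unfolding r_def .
          have rp: "r \<subseteq> p" unfolding r_def using ass_sat_sub[OF HS P cx] c(2) by simp
          obtain s where s: "s \<in> carrier R - p" "r = colon H (s \<odot>\<^bsub>M\<^esub> (c \<odot>\<^bsub>M\<^esub> x))"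
            using fg_pull[OF HS P cx] unfolding r_def by blast
          define z where "z = s \<odot>\<^bsub>M\<^esub> (c \<odot>\<^bsub>M\<^esub> x)"
          have zc: "z \<in> carrier M" unfolding z_def using s cx by simp
          have "colon H z = carrier R \<inter> (\<Inter>r'\<in>AA. colon (G J r') z)"
            unfolding H_def colon_def using zc by auto
          then have "r = carrier R \<inter> (\<Inter>r'\<in>AA. colon (G J r') z)" using s(2) unfolding z_def by simp
          moreover have "\<forall>r'\<in>AA. ideal (colon (G J r') z) R" using colon_ideal[OF GS[OF AAP] zc] by blast
          ultimately obtain r' where r': "r' \<in> AA" "r = colon (G J r') z"
            using prime_inter[OF fin _ rP, of "\<lambda>r'. colon (G J r') z"] by blast
          have rA: "r \<in> AA" using assAA[OF AAP[OF r'(1)] zc r'(2) rP] .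
          have "x \<in> G J r" using GC[OF rP P rp] sub_sat[OF GS[OF P] rP] xG by auto
          then have "z \<in> G J r" unfolding z_def using sub_props(4)[OF GS[OF rP]] c s by auto
          then have "\<one> \<in> colon (G J r) z" unfolding colon_def using zc by simp
          moreover have "colon (G J r) z = r"
          proof -
            have "colon (G J r) z = colon (sat r (G J r')) z"
              using GC[OF rP AAP[OF r'(1)]] ass_sat_sub[OF GS[OF AAP[OF r'(1)]] AAP[OF r'(1)] zc]
                Gsat[OF AAP[OF r'(1)]] r'(2) rP by simp
            also have "\<dots> = r" using colon_sat_prime[OF GS[OF AAP[OF r'(1)]] rP zc r'(2)] .
            finally show ?thesis .
          qed
          ultimately show False using prime_one[OF rP] by simp
        qed
      qed
    qed
    have "\<forall>p. primeideal p R \<longrightarrow> loc_sub R M p H = J p"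
    proof (intro allI impI)
      fix p assume P: "primeideal p R"
      have "loc_sub R M p H = loc_sub R M p (sat p H)" using loc_sub_sat[OF P HS] by simp
      also have "\<dots> = loc_sub R M p (G J p)" using satH[OF P] by simp
      also have "\<dots> = J p" using loc_sub_G[of p J, OF P JS[OF P]] .
      finally show "loc_sub R M p H = J p" .
    qed
    then show ?thesis using HS by blast
  qed
  show ?thesis
  proof (intro conjI)
    show "(\<exists>F. submodule F R M \<and> (\<forall>p. primeideal p R \<longrightarrow> loc_sub R M p F = J p)) \<longleftrightarrow>
      ((\<forall>p q. primeideal p R \<and> primeideal q R \<and> p \<subseteq> q \<longrightarrow> J p = loc_sub_at R M p q (J q)) \<and> finite AA)"
      using P1a P1b by blast
    show "\<forall>F F'. submodule F R M \<and> (\<forall>p. primeideal p R \<longrightarrow> loc_sub R M p F = J p) \<and>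
           submodule F' R M \<and> (\<forall>p. primeideal p R \<longrightarrow> loc_sub R M p F' = J p) \<longrightarrow> F = F'"
      using P2 by blast
    show "\<forall>F. submodule F R M \<and> (\<forall>p. primeideal p R \<longrightarrow> loc_sub R M p F = J p) \<longrightarrow> ass_quot R M F = AA"
      using P3 by blast
  qed
qed

end

theorem lemma3:
  fixes R :: "'a ring" and M :: "('a, 'b) module"
    and J :: "'a set \<Rightarrow> ('b \<times> 'a) set set"
  assumes "noetherian_ring R" and "module R M" and "fin_gen_module R M"
    and J_sub: "\<And>p. primeideal p R \<Longrightarrow> submodule (J p) (loc_ring R p) (loc_module R M p)"
  defines "\<AA> \<equiv> {p. primeideal p R \<and>
      ext_ideal R p p \<in> ass_quot (loc_ring R p) (loc_module R M p) (J p)}"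
  shows "((\<exists>F. submodule F R M \<and> (\<forall>p. primeideal p R \<longrightarrow> loc_sub R M p F = J p))
           \<longleftrightarrow> ((\<forall>p q. primeideal p R \<and> primeideal q R \<and> p \<subseteq> q \<longrightarrow> J p = loc_sub_at R M p q (J q))
                \<and> finite \<AA>))
      \<and> (\<forall>F F'. submodule F R M \<and> (\<forall>p. primeideal p R \<longrightarrow> loc_sub R M p F = J p) \<and>
           submodule F' R M \<and> (\<forall>p. primeideal p R \<longrightarrow> loc_sub R M p F' = J p) \<longrightarrow> F = F')
      \<and> (\<forall>F. submodule F R M \<and> (\<forall>p. primeideal p R \<longrightarrow> loc_sub R M p F = J p) \<longrightarrow>
           ass_quot R M F = \<AA>)"
proof -
  have "LG R M" unfolding LG_def using assms(1,2) by simp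
  then show ?thesis unfolding \<AA>_def by (rule LG.main[OF _ assms(3) J_sub])
qed



end
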